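(* Let $k,n,t$ be positive integers. If $\pi$ is chosen uniformly at random from $NC^k(n)$, the expected number of blocks of $\pi$ of size $tk$ is $$\frac{(nk+1)\binom{n(k+1)-t-1}{nk-1}}{\binom{(k+1)n}{n}}.$$
   Context: A partition $\pi$ of $[N]=\{1,\dots,N\}$ is non-crossing if there are no $1\le a<b<c<d\le N$ with $a,c$ in one block and $b,d$ in another. $NC^k(n)$ is the set of non-crossing partitions of $[kn]$ all of whose blocks have size divisible by $k$. $\binom{a}{b}=\frac{a!}{b!(a-b)!}$ if $0\le b\le a$ and $0$ otherwise. *)

theory Defs
  imports Complex_Main "HOL-Library.Disjoint_Sets"
begin

definition noncrossing_partition :: "nat \<Rightarrow> nat set set \<Rightarrow> bool" where
  "noncrossing_partition N \<pi> \<longleftrightarrow>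
     partition_on {1..N} \<pi> \<and>
     \<not> (\<exists>a b c d B1 B2. 1 \<le> a \<and> a < b \<and> b < c \<and> c < d \<and> d \<le> N \<and>
          B1 \<in> \<pi> \<and> B2 \<in> \<pi> \<and> B1 \<noteq> B2 \<and> a \<in> B1 \<and> c \<in> B1 \<and> b \<in> B2 \<and> d \<in> B2)"

definition NCk :: "nat \<Rightarrow> nat \<Rightarrow> nat set set set" where
  "NCk k n = {\<pi>. noncrossing_partition (k * n) \<pi> \<and> (\<forall>B\<in>\<pi>. k dvd card B)}"

definition binom :: "int \<Rightarrow> int \<Rightarrow> nat" where
  "binom a b = (if 0 \<le> b \<and> b \<le> a then nat a choose nat b else 0)"

end

theory Submission
  imports Defs "HOL-Computational_Algebra.Formal_Power_Series"
begin

unbundle fps_syntax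

lemma rec_unique:
  fixes F G :: "nat \<Rightarrow> real fps"
  assumes k: "0 < k"
    and F: "\<And>s. 0 < s \<Longrightarrow> F s = F (s-1) + fps_X^k * F (s+k)"
    and G: "\<And>s. 0 < s \<Longrightarrow> G s = G (s-1) + fps_X^k * G (s+k)"
    and b: "F 0 = G 0"
  shows "F s = G s"
proof -
  have "\<forall>s. F s $ N = G s $ N" for N
  proof (induction N rule: less_induct)
    case (less N)
    show ?case
    proof
      fix s show "F s $ N = G s $ N"
      proof (induction s)
        case 0 then show ?case using b by simp
      next
        case (Suc s)
        have "F (Suc s) $ N = F s $ N + (fps_X^k * F (Suc s+k)) $ N"
          using F[of "Suc s"] by simp
        also have "\<dots> = G s $ N + (fps_X^k * G (Suc s+k)) $ N"
          using Suc less k by (simp add: fps_X_power_mult_nth)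
        also have "\<dots> = G (Suc s) $ N" using G[of "Suc s"] by simp
        finally show ?case .
      qed
    qed
  qed
  then show ?thesis by (intro fps_ext) auto
qed

definition gc :: "nat \<Rightarrow> nat \<Rightarrow> nat \<Rightarrow> nat" where
  "gc k s m = (if s = 0 \<and> m = 0 then 1 else (s + (k+1)*m - 1) choose m)"

definition Gs :: "nat \<Rightarrow> nat \<Rightarrow> real fps" where
  "Gs k s = Abs_fps (\<lambda>N. if k dvd N then real (gc k s (N div k)) else 0)"

definition ae :: "nat \<Rightarrow> nat \<Rightarrow> nat \<Rightarrow> real" where
  "ae k s m = real ((s + (k+1)*m) choose m) -
      (if m = 0 then 0 else real (k+1) * real ((s + (k+1)*m - 1) choose (m-1)))"

definition Es :: "nat \<Rightarrow> nat \<Rightarrow> real fps" where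
  "Es k s = Abs_fps (\<lambda>N. if k dvd N then ae k s (N div k) else 0)"

lemma gc_rec:
  assumes "0 < s" "0 < k"
  shows "gc k s (Suc m) = gc k (s-1) (Suc m) + gc k (s+k) m"
proof -
  define T where "T = s + (k+1)*m + k - 1"
  have 1: "s + (k+1)*Suc m - 1 = Suc T" using assms by (simp add: T_def algebra_simps)
  have 2: "s - 1 + (k+1)*Suc m - 1 = T" using assms by (simp add: T_def algebra_simps)
  have 3: "s + k + (k+1)*m - 1 = T" using assms by (simp add: T_def algebra_simps)
  show ?thesis unfolding gc_def using assms 1 2 3 by (simp add: binomial_Suc_Suc)
qed

lemma Gs_rec:
  assumes "0 < s" "0 < k"
  shows "Gs k s = Gs k (s-1) + fps_X^k * Gs k (s+k)"
proof (rule fps_ext)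
  fix N
  show "Gs k s $ N = (Gs k (s-1) + fps_X^k * Gs k (s+k)) $ N"
  proof (cases "k dvd N")
    case True
    then obtain m where N: "N = k*m" by auto
    show ?thesis
    proof (cases m)
      case 0
      then show ?thesis using assms N by (simp add: Gs_def fps_X_power_mult_nth gc_def)
    next
      case (Suc m')
      have "N - k = k * m'" using N Suc by (simp add: algebra_simps)
      then show ?thesis using assms N Suc gc_rec[OF assms, of m']
        by (simp add: Gs_def fps_X_power_mult_nth)
    qed
  next
    case False
    then have "\<not> k dvd (N - k)" if "k \<le> N" using that
      by (metis dvd_diff_nat dvd_refl le_add_diff_inverse2 dvd_add)
    then show ?thesis using False by (simp add: Gs_def fps_X_power_mult_nth)
  qed
qed

lemma ae_rec:
  assumes "0 < s" "0 < k"
  shows "ae k s (Suc m) = ae k (s-1) (Suc m) + ae k (s+k) m"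
proof -
  define T where "T = s + k + (k+1)*m"
  have T1: "T \<ge> 1" using assms by (simp add: T_def)
  have 1: "s + (k+1)*Suc m = Suc T" using assms by (simp add: T_def algebra_simps)
  have 2: "s - 1 + (k+1)*Suc m = T" using assms by (simp add: T_def algebra_simps)
  have 3: "s + k + (k+1)*m = T" using assms by (simp add: T_def algebra_simps)
  have P1: "Suc T choose Suc m = (T choose m) + (T choose Suc m)" by (simp add: binomial_Suc_Suc)
  have P2: "real (T choose m) = real (T - 1 choose m) + (if m = 0 then 0 else real (T - 1 choose (m - 1)))"
  proof (cases m)
    case 0 then show ?thesis by simp
  next
    case (Suc m'')
    obtain T' where "T = Suc T'" using T1 by (cases T) auto
    then show ?thesis using Suc by (simp add: binomial_Suc_Suc)
  qed
  have A: "ae k s (Suc m) = real (Suc T choose Suc m) - real (k+1) * real (T choose m)"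
    unfolding ae_def using 1 by simp
  have B: "ae k (s-1) (Suc m) = real (T choose Suc m) - real (k+1) * real (T - 1 choose m)"
    unfolding ae_def using 2 by simp
  have C: "ae k (s+k) m = real (T choose m) -
      (if m = 0 then 0 else real (k+1) * real (T - 1 choose (m-1)))"
    unfolding ae_def using 3 by simp
  have P1': "real (Suc T choose Suc m) = real (T choose m) + real (T choose Suc m)"
    using P1 by simp
  show ?thesis unfolding A B C P1' using P2
    by (cases "m = 0") (simp_all add: algebra_simps)
qed

lemma Es_rec:
  assumes "0 < s" "0 < k"
  shows "Es k s = Es k (s-1) + fps_X^k * Es k (s+k)"
proof (rule fps_ext)
  fix N
  show "Es k s $ N = (Es k (s-1) + fps_X^k * Es k (s+k)) $ N"
  proof (cases "k dvd N")
    case True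
    then obtain m where N: "N = k*m" by auto
    show ?thesis
    proof (cases m)
      case 0
      then show ?thesis using assms N by (simp add: Es_def fps_X_power_mult_nth ae_def)
    next
      case (Suc m')
      have "N - k = k * m'" using N Suc by (simp add: algebra_simps)
      then show ?thesis using assms N Suc ae_rec[OF assms, of m']
        by (simp add: Es_def fps_X_power_mult_nth)
    qed
  next
    case False
    then have "\<not> k dvd (N - k)" if "k \<le> N" using that
      by (metis dvd_diff_nat dvd_refl le_add_diff_inverse2 dvd_add)
    then show ?thesis using False by (simp add: Es_def fps_X_power_mult_nth)
  qed
qed

lemma ae0: "ae k 0 m = (if m = 0 then 1 else 0)"
proof (cases m)
  case 0 then show ?thesis by (simp add: ae_def)
next
  case (Suc m')
  define n where "n = (k+1)*Suc m' - 1"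
  have n: "(k+1)*Suc m' = Suc n" by (simp add: n_def)
  have "Suc m' * (Suc n choose Suc m') = Suc n * (n choose m')" by (rule Suc_times_binomial)
  then have "real (Suc m') * real (Suc n choose Suc m') = real (Suc m') * (real (k+1) * real (n choose m'))"
    using n by (metis mult.assoc mult.commute of_nat_mult)
  then have "real (Suc n choose Suc m') = real (k+1) * real (n choose m')" by simp
  then show ?thesis using Suc n by (simp add: ae_def n_def)
qed

lemma Es0: "0 < k \<Longrightarrow> Es k 0 = 1"
  by (rule fps_ext) (auto simp: Es_def ae0 elim!: dvdE)

lemma Gs0: assumes "0 < k"
  shows "of_nat (k+1) * Gs k 0 - of_nat k * Gs k 1 = 1"
proof (rule fps_ext)
  fix N
  have key: "real (k+1) * real (gc k 0 m) - real k * real (gc k 1 m) = (if m = 0 then 1 else 0)" for m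
  proof (cases m)
    case 0 then show ?thesis by (simp add: gc_def)
  next
    case (Suc m')
    have "((k+1)*m - m) * ((k+1)*m choose m) = (k+1)*m * (((k+1)*m - 1) choose m)"
      by (rule binomial_absorb_comp)
    then have "m * (k * ((k+1)*m choose m)) = m * ((k+1) * (((k+1)*m - 1) choose m))"
      by (simp add: algebra_simps)
    then have "k * ((k+1)*m choose m) = (k+1) * (((k+1)*m - 1) choose m)" using Suc
      by (metis mult_left_cancel nat.distinct(1))
    then have "real k * real ((k+1)*m choose m) = real (k+1) * real (((k+1)*m - 1) choose m)"
      by (metis of_nat_mult)
    then show ?thesis using Suc by (simp add: gc_def)
  qed
  show "(of_nat (k+1) * Gs k 0 - of_nat k * Gs k 1) $ N = 1 $ N"
    using key[of "N div k"] assms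
    by (auto simp: Gs_def fps_of_nat[symmetric] elim!: dvdE)
qed

lemma D_step:
  fixes D C :: "real fps"
  assumes D1: "D = 1 + fps_X^k * D^(k+1)"
  shows "C * D^(Suc s) = C * D^s + fps_X^k * (C * D^(Suc s + k))"
proof -
  have "C * D^Suc s = C * D^s * D" by (simp add: mult.assoc)
  also have "\<dots> = C * D^s * (1 + fps_X^k * D^(k+1))" by (simp only: D1[symmetric])
  also have "\<dots> = C * D^s + fps_X^k * (C * (D^s * D^(k+1)))"
    by (simp add: distrib_left mult.assoc mult.left_commute)
  also have "D^s * D^(k+1) = D^(Suc s + k)" by (simp add: power_add[symmetric])
  finally show ?thesis .
qed

lemma fps_main:
  fixes D M M' :: "real fps" and E Ff :: "nat \<Rightarrow> real fps"
  assumes k: "0 < k"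
    and E0: "E 0 = 1" and ES: "\<And>s. E (Suc s) = fps_X * D * E s"
    and F0: "Ff 0 = 0" and FS: "\<And>s. Ff (Suc s) = fps_X * (M * E s + D * Ff s)"
    and DR: "D = 1 + E k * D"
    and MR': "M' = Ff k * D + E k * M'"
    and MR: "M = M' + E j"
  shows "D ^ s = Es k s" and "M = fps_X ^ j * Gs k j"
proof -
  have Ep: "E s = (fps_X * D) ^ s" for s
    by (induction s) (simp_all add: E0 ES algebra_simps)
  have FD: "Ff s * D = of_nat s * (fps_X * D) ^ s * M" for s
  proof (induction s)
    case 0 then show ?case by (simp add: F0)
  next
    case (Suc s)
    have "Ff (Suc s) * D = fps_X * D * M * E s + fps_X * D * (Ff s * D)"
      by (simp add: FS algebra_simps)
    also have "\<dots> = of_nat (Suc s) * (fps_X * D) ^ Suc s * M"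
      using Suc by (simp add: Ep algebra_simps)
    finally show ?case .
  qed
  have ED0: "E k * D = D - 1" by (metis DR add_diff_cancel_left')
  have ED: "(fps_X * D) ^ k * D = D - 1" using ED0 Ep[of k] by simp
  have "fps_X ^ k * D ^ (k+1) = (fps_X * D) ^ k * D"
    by (simp add: power_mult_distrib power_Suc2 mult.assoc)
  then have D1: "D = 1 + fps_X ^ k * D ^ (k+1)" using ED by simp
  have "M' * D = of_nat k * (D - 1) * M + (D - 1) * M'"
  proof -
    have "M' * D = (Ff k * D) * D + E k * D * M'" by (subst MR') (simp add: algebra_simps)
    also have "\<dots> = of_nat k * ((fps_X * D) ^ k * D) * M + ((fps_X * D) ^ k * D) * M'"
      by (simp only: FD Ep) (simp add: algebra_simps)
    finally show ?thesis by (simp add: ED)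
  qed
  then have M'e: "M' = of_nat k * (D - 1) * M" by (simp add: algebra_simps)
  have Mq: "M * (of_nat (k+1) - of_nat k * D) = fps_X ^ j * D ^ j"
  proof -
    have M1: "M = of_nat k * (D - 1) * M + (fps_X * D) ^ j" using MR M'e Ep by simp
    have "M * (of_nat (k+1) - of_nat k * D) = M - of_nat k * (D - 1) * M"
      by (simp add: algebra_simps)
    also have "\<dots> = (fps_X * D) ^ j" using M1 by (metis add_diff_cancel_left')
    finally show ?thesis by (simp add: power_mult_distrib)
  qed
  have Dp: "D ^ s = Es k s" for s
  proof (rule rec_unique[OF k, of "\<lambda>s. D ^ s" "Es k"])
    fix s :: nat assume "0 < s"
    then obtain s' where s: "s = Suc s'" by (cases s) auto
    show "D ^ s = D ^ (s-1) + fps_X ^ k * D ^ (s+k)" using D_step[OF D1, of 1 s'] by (simp add: s)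
  next
    fix s :: nat assume "0 < s" then show "Es k s = Es k (s-1) + fps_X^k * Es k (s+k)"
      using Es_rec[of s k] k by blast
  next
    show "D ^ 0 = Es k 0" using Es0 k by simp
  qed
  then show "D ^ s = Es k s" .
  have H: "Gs k 0 * D ^ s = Gs k s" for s
  proof (rule rec_unique[OF k, of "\<lambda>s. Gs k 0 * D ^ s" "Gs k"])
    fix s :: nat assume "0 < s"
    then obtain s' where s: "s = Suc s'" by (cases s) auto
    show "Gs k 0 * D ^ s = Gs k 0 * D ^ (s-1) + fps_X ^ k * (Gs k 0 * D ^ (s+k))"
      using D_step[OF D1, of "Gs k 0" s'] by (simp add: s)
  next
    fix s :: nat assume "0 < s" then show "Gs k s = Gs k (s-1) + fps_X^k * Gs k (s+k)"
      using Gs_rec[of s k] k by blast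
  qed simp
  have inv: "(of_nat (k+1) - of_nat k * D) * Gs k 0 = 1"
    using Gs0[OF k] H[of 1] by (simp add: algebra_simps)
  have "M = M * ((of_nat (k+1) - of_nat k * D) * Gs k 0)" by (simp only: inv mult_1_right)
  also have "\<dots> = (M * (of_nat (k+1) - of_nat k * D)) * Gs k 0" by (simp only: mult.assoc)
  also have "\<dots> = fps_X ^ j * D ^ j * Gs k 0" by (simp only: Mq)
  also have "\<dots> = fps_X ^ j * (Gs k 0 * D ^ j)" by (simp add: mult_ac)
  also have "\<dots> = fps_X ^ j * Gs k j" by (simp add: H)
  finally show "M = fps_X ^ j * Gs k j" .
qed



definition nc :: "nat set set \<Rightarrow> bool" where
  "nc P \<longleftrightarrow> (\<forall>x y z w X Y. x < y \<longrightarrow> y < z \<longrightarrow> z < w \<longrightarrow> X \<in> P \<longrightarrow> Y \<in> P \<longrightarrow>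
     x \<in> X \<longrightarrow> z \<in> X \<longrightarrow> y \<in> Y \<longrightarrow> w \<in> Y \<longrightarrow> X = Y)"

lemma ncD: "nc P \<Longrightarrow> x < y \<Longrightarrow> y < z \<Longrightarrow> z < w \<Longrightarrow> X \<in> P \<Longrightarrow> Y \<in> P \<Longrightarrow>
     x \<in> X \<Longrightarrow> z \<in> X \<Longrightarrow> y \<in> Y \<Longrightarrow> w \<in> Y \<Longrightarrow> X = Y"
  unfolding nc_def by blast

lemma ncI: "(\<And>x y z w X Y. x < y \<Longrightarrow> y < z \<Longrightarrow> z < w \<Longrightarrow> X \<in> P \<Longrightarrow> Y \<in> P \<Longrightarrow>
     x \<in> X \<Longrightarrow> z \<in> X \<Longrightarrow> y \<in> Y \<Longrightarrow> w \<in> Y \<Longrightarrow> X = Y) \<Longrightarrow> nc P"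
  unfolding nc_def by blast

definition blk :: "nat \<Rightarrow> nat set set \<Rightarrow> nat set" where
  "blk x P = \<Union>{B\<in>P. x \<in> B}"

definition FF :: "nat \<Rightarrow> nat \<Rightarrow> nat \<Rightarrow> nat set set set" where
  "FF k a b = {P. partition_on {a..<b} P \<and> nc P \<and> (\<forall>B\<in>P. a \<notin> B \<longrightarrow> k dvd card B)}"

definition cls :: "nat \<Rightarrow> nat \<Rightarrow> nat \<Rightarrow> nat set \<Rightarrow> nat set set set" where
  "cls k a b U = {P \<in> FF k a b. card (blk a P) \<in> U}"

definition nf :: "nat \<Rightarrow> nat \<Rightarrow> nat \<Rightarrow> nat set set \<Rightarrow> nat" where
  "nf t k a P = card {B\<in>P. a \<notin> B \<and> card B = t * k}"

definition mk :: "nat \<Rightarrow> nat \<Rightarrow> nat set set \<Rightarrow> nat" where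
  "mk t k P = card {B\<in>P. card B = t * k}"

lemma part_disj: "partition_on A P \<Longrightarrow> X \<in> P \<Longrightarrow> Y \<in> P \<Longrightarrow> x \<in> X \<Longrightarrow> x \<in> Y \<Longrightarrow> X = Y"
  unfolding partition_on_def disjoint_def by blast

lemma part_sub: "partition_on A P \<Longrightarrow> X \<in> P \<Longrightarrow> X \<subseteq> A"
  unfolding partition_on_def by blast

lemma part_ne: "partition_on A P \<Longrightarrow> X \<in> P \<Longrightarrow> X \<noteq> {}"
  unfolding partition_on_def by blast

lemma part_cov: "partition_on A P \<Longrightarrow> x \<in> A \<Longrightarrow> \<exists>X\<in>P. x \<in> X"
  unfolding partition_on_def by blast

lemma blk_eq: assumes "partition_on A P" "B \<in> P" "x \<in> B" shows "blk x P = B"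
proof -
  have "{C\<in>P. x \<in> C} = {B}" using part_disj[OF assms(1) _ assms(2) _ assms(3)] assms by blast
  then show ?thesis by (simp add: blk_def)
qed

lemma blk_in: assumes "partition_on A P" "x \<in> A" shows "blk x P \<in> P \<and> x \<in> blk x P"
proof -
  obtain X where "X \<in> P" "x \<in> X" using part_cov[OF assms] by blast
  then show ?thesis using blk_eq[OF assms(1)] by simp
qed

lemma blk_empty: "partition_on A P \<Longrightarrow> x \<notin> A \<Longrightarrow> blk x P = {}"
  unfolding blk_def using part_sub by blast

lemma FF_finite: "finite (FF k a b)"
proof -
  have "FF k a b \<subseteq> {P. partition_on {a..<b} P}" by (auto simp: FF_def)
  moreover have "finite {P. partition_on {a..<b} P}" by (rule finitely_many_partition_on) simp
  ultimately show ?thesis by (rule finite_subset)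
qed

lemma cls_finite: "finite (cls k a b U)"
proof -
  have "cls k a b U \<subseteq> FF k a b" by (auto simp: cls_def)
  then show ?thesis using FF_finite by (rule finite_subset)
qed

lemma FF_part: "P \<in> FF k a b \<Longrightarrow> partition_on {a..<b} P"
  by (simp add: FF_def)

lemma FF_nc: "P \<in> FF k a b \<Longrightarrow> nc P"
  by (simp add: FF_def)

lemma FF_dvd: "P \<in> FF k a b \<Longrightarrow> B \<in> P \<Longrightarrow> a \<notin> B \<Longrightarrow> k dvd card B"
  by (simp add: FF_def)

lemma FF_blkfin: assumes "P \<in> FF k a b" "B \<in> P" shows "finite B"
proof -
  have "B \<subseteq> {a..<b}" using part_sub[OF FF_part[OF assms(1)] assms(2)] .
  then show ?thesis by (rule finite_subset) simp
qed

lemma blk_fin: assumes "P \<in> FF k a b" shows "finite (blk x P)"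
proof -
  have "blk x P \<subseteq> {a..<b}" unfolding blk_def using part_sub[OF FF_part[OF assms]] by blast
  then show ?thesis by (rule finite_subset) simp
qed

subsection \<open>Shift\<close>

definition sh :: "nat \<Rightarrow> nat set set \<Rightarrow> nat set set" where
  "sh d P = (`) ((+) d) ` P"

definition ush :: "nat \<Rightarrow> nat set set \<Rightarrow> nat set set" where
  "ush d P = (\<lambda>B. (+) d -` B) ` P"

lemma inj_img_add: "inj ((`) ((+) (d::nat)))"
  by (simp add: inj_image_eq_iff inj_def)

lemma sh_part: assumes "partition_on {a..<b} P" shows "partition_on {a+d..<b+d} (sh d P)"
proof -
  have "partition_on ((+) d ` {a..<b}) ((`) ((+) d) ` P - {{}})"
    by (rule partition_on_inj_image[OF assms]) simp
  moreover have "(`) ((+) d) ` P - {{}} = sh d P" using part_ne[OF assms] by (auto simp: sh_def)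
  ultimately show ?thesis by (simp add: add.commute)
qed

lemma ush_part: assumes "partition_on {a+d..<b+d} P" shows "partition_on {a..<b} (ush d P)"
proof -
  have "partition_on ((+) d -` {a+d..<b+d}) ((-`) ((+) d) ` P - {{}})"
    by (rule partition_on_vimage[OF assms])
  moreover have "(-`) ((+) d) ` P - {{}} = ush d P"
  proof -
    have "(+) d -` B \<noteq> {}" if B: "B \<in> P" for B
    proof -
      obtain x where "x \<in> B" using part_ne[OF assms B] by auto
      moreover have "x \<ge> d" using part_sub[OF assms B] \<open>x\<in>B\<close> by auto
      ultimately have "x - d \<in> (+) d -` B" by auto
      then show ?thesis by auto
    qed
    then show ?thesis by (auto simp: ush_def)
  qed
  moreover have "(+) d -` {a+d..<b+d} = {a..<b}" by auto
  ultimately show ?thesis by simp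
qed

lemma inj_add: "inj ((+) (d::nat))"
  by (rule injI) simp

lemma ush_sh: "ush d (sh d P) = P"
proof -
  have "(+) d -` ((+) d ` B) = B" for B using inj_vimage_image_eq[OF inj_add] .
  then show ?thesis by (simp add: ush_def sh_def image_image)
qed

lemma sh_ush: assumes "partition_on {a+d..<b+d} P" shows "sh d (ush d P) = P"
proof -
  have "(+) d ` ((+) d -` B) = B" if B: "B \<in> P" for B
  proof -
    have "B \<subseteq> range ((+) d)"
    proof
      fix x assume "x \<in> B"
      then have "x \<ge> d" using part_sub[OF assms B] by auto
      then have "x = d + (x - d)" by simp
      then show "x \<in> range ((+) d)" by (rule range_eqI)
    qed
    then show ?thesis by (simp add: image_vimage_eq Int_absorb2)
  qed
  then show ?thesis by (simp add: ush_def sh_def image_image)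
qed

lemma sh_nc: assumes P: "nc P" shows "nc (sh d P)"
  unfolding sh_def
proof (rule ncI)
  fix x y z w X Y
  assume h: "x < y" "y < z" "z < w" "X \<in> (`) ((+) d) ` P" "Y \<in> (`) ((+) d) ` P"
    "x \<in> X" "z \<in> X" "y \<in> Y" "w \<in> Y"
  obtain X0 where X0: "X0 \<in> P" "X = (+) d ` X0" using h(4) by (rule imageE) blast
  obtain Y0 where Y0: "Y0 \<in> P" "Y = (+) d ` Y0" using h(5) by (rule imageE) blast
  obtain x0 where x0: "x0 \<in> X0" "x = d + x0" using h(6) X0(2) by blast
  obtain z0 where z0: "z0 \<in> X0" "z = d + z0" using h(7) X0(2) by blast
  obtain y0 where y0: "y0 \<in> Y0" "y = d + y0" using h(8) Y0(2) by blast
  obtain w0 where w0: "w0 \<in> Y0" "w = d + w0" using h(9) Y0(2) by blast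
  have "x0 < y0" "y0 < z0" "z0 < w0" using h(1-3) x0 y0 z0 w0 by simp_all
  then have "X0 = Y0" using ncD[OF P _ _ _ X0(1) Y0(1) x0(1) z0(1) y0(1) w0(1)] by blast
  then show "X = Y" using X0 Y0 by simp
qed

lemma ush_nc: assumes "nc P" shows "nc (ush d P)"
  unfolding ush_def
proof (rule ncI)
  fix x y z w X Y
  assume h: "x < y" "y < z" "z < w" "X \<in> (-`) ((+) d) ` P" "Y \<in> (-`) ((+) d) ` P"
    "x \<in> X" "z \<in> X" "y \<in> Y" "w \<in> Y"
  obtain X0 where X0: "X0 \<in> P" "X = (+) d -` X0" using h(4) by (rule imageE) blast
  obtain Y0 where Y0: "Y0 \<in> P" "Y = (+) d -` Y0" using h(5) by (rule imageE) blast
  have m: "d + x \<in> X0" "d + z \<in> X0" "d + y \<in> Y0" "d + w \<in> Y0" using h(6-9) X0(2) Y0(2) by auto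
  have "d + x < d + y" "d + y < d + z" "d + z < d + w" using h(1-3) by simp_all
  then have "X0 = Y0" using ncD[OF assms _ _ _ X0(1) Y0(1) m(1) m(2) m(3) m(4)] by blast
  then show "X = Y" using X0 Y0 by simp
qed

lemma card_sh: "card ((+) (d::nat) ` B) = card B"
  by (simp add: card_image)

lemma sh_blk: assumes "partition_on {a..<b} P" shows "blk (a+d) (sh d P) = (+) d ` blk a P"
proof (cases "a < b")
  case True
  have "blk a P \<in> P" "a \<in> blk a P" using blk_in[OF assms] True by auto
  then have "(+) d ` blk a P \<in> sh d P" "a + d \<in> (+) d ` blk a P" by (auto simp: sh_def)
  then show ?thesis using blk_eq[OF sh_part[OF assms]] by blast
next
  case False
  then have "blk a P = {}" using blk_empty[OF assms] by auto
  moreover have "blk (a+d) (sh d P) = {}" using blk_empty[OF sh_part[OF assms]] False by auto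
  ultimately show ?thesis by simp
qed

lemma sh_cls: assumes "P \<in> cls k a b U" shows "sh d P \<in> cls k (a+d) (b+d) U"
proof -
  have p: "partition_on {a..<b} P" and n: "nc P" and dv: "\<forall>B\<in>P. a \<notin> B \<longrightarrow> k dvd card B"
    and c: "card (blk a P) \<in> U" using assms by (auto simp: cls_def FF_def)
  have "\<forall>B\<in>sh d P. a + d \<notin> B \<longrightarrow> k dvd card B" using dv by (auto simp: sh_def card_sh)
  moreover have "card (blk (a+d) (sh d P)) \<in> U" using c by (simp add: sh_blk[OF p] card_sh)
  ultimately show ?thesis using sh_part[OF p] sh_nc[OF n] by (simp add: cls_def FF_def)
qed

lemma ush_cls: assumes "P \<in> cls k (a+d) (b+d) U" shows "ush d P \<in> cls k a b U"
proof -
  have p: "partition_on {a+d..<b+d} P" and n: "nc P" using assms by (auto simp: cls_def FF_def)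
  have e: "P = sh d (ush d P)" using sh_ush[OF p] by simp
  have "sh d (ush d P) \<in> cls k (a+d) (b+d) U" using assms e by simp
  then have dv: "\<forall>B\<in>sh d (ush d P). a + d \<notin> B \<longrightarrow> k dvd card B"
    and c: "card (blk (a+d) (sh d (ush d P))) \<in> U" by (auto simp: cls_def FF_def)
  have p2: "partition_on {a..<b} (ush d P)" using ush_part[OF p] .
  have "\<forall>B\<in>ush d P. a \<notin> B \<longrightarrow> k dvd card B"
  proof (intro ballI impI)
    fix B assume "B \<in> ush d P" "a \<notin> B"
    then have "(+) d ` B \<in> sh d (ush d P)" "a + d \<notin> (+) d ` B" by (auto simp: sh_def)
    then show "k dvd card B" using dv by (metis card_sh)
  qed
  moreover have "card (blk a (ush d P)) \<in> U" using c by (simp add: sh_blk[OF p2] card_sh)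
  ultimately show ?thesis using p2 ush_nc[OF n] by (simp add: cls_def FF_def)
qed

lemma sh_bij: "bij_betw (sh d) (cls k a b U) (cls k (a+d) (b+d) U)"
proof (rule bij_betw_byWitness[where f'="ush d"])
  show "\<forall>P\<in>cls k a b U. ush d (sh d P) = P" by (simp add: ush_sh)
  show "\<forall>P\<in>cls k (a+d) (b+d) U. sh d (ush d P) = P" using sh_ush by (auto simp: cls_def FF_def)
  show "sh d ` cls k a b U \<subseteq> cls k (a+d) (b+d) U" using sh_cls by blast
  show "ush d ` cls k (a+d) (b+d) U \<subseteq> cls k a b U" using ush_cls by blast
qed

lemma nf_sh: assumes "partition_on {a..<b} P" shows "nf t k (a+d) (sh d P) = nf t k a P"
proof -
  have "{B\<in>sh d P. a + d \<notin> B \<and> card B = t * k} = (`) ((+) d) ` {B\<in>P. a \<notin> B \<and> card B = t * k}"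
    by (auto simp: sh_def card_sh)
  then show ?thesis unfolding nf_def by (simp add: card_image inj_on_def inj_image_eq_iff)
qed

lemma mk_sh: "mk t k (sh d P) = mk t k P"
proof -
  have "{B\<in>sh d P. card B = t * k} = (`) ((+) d) ` {B\<in>P. card B = t * k}"
    by (auto simp: sh_def card_sh)
  then show ?thesis unfolding mk_def by (simp add: card_image inj_on_def inj_image_eq_iff)
qed

lemma card_cls_shift: "a \<le> b \<Longrightarrow> card (cls k a b U) = card (cls k 0 (b - a) U)"
  using bij_betw_same_card[OF sh_bij[of a k 0 "b-a" U]] by simp

lemma sum_nf_shift: "a \<le> b \<Longrightarrow>
  (\<Sum>P\<in>cls k a b U. real (nf t k a P)) = (\<Sum>P\<in>cls k 0 (b - a) U. real (nf t k 0 P))"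
proof -
  assume ab: "a \<le> b"
  have "(\<Sum>P\<in>cls k 0 (b - a) U. real (nf t k a (sh a P))) = (\<Sum>P\<in>cls k a b U. real (nf t k a P))"
    using sum.reindex_bij_betw[OF sh_bij[of a k 0 "b-a" U]] ab by simp
  moreover have "P \<in> cls k 0 (b - a) U \<Longrightarrow> nf t k a (sh a P) = nf t k 0 P" for P
    using nf_sh[where a=0 and b="b-a" and P=P and d=a and t=t and k=k] by (simp add: cls_def FF_def)
  ultimately show ?thesis by simp
qed

lemma sum_mk_shift: "a \<le> b \<Longrightarrow>
  (\<Sum>P\<in>cls k a b U. real (mk t k P)) = (\<Sum>P\<in>cls k 0 (b - a) U. real (mk t k P))"
proof -
  assume ab: "a \<le> b"
  have "(\<Sum>P\<in>cls k 0 (b - a) U. real (mk t k (sh a P))) = (\<Sum>P\<in>cls k a b U. real (mk t k P))"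
    using sum.reindex_bij_betw[OF sh_bij[of a k 0 "b-a" U]] ab by simp
  then show ?thesis by (simp add: mk_sh)
qed

lemma nc_subset: "nc P \<Longrightarrow> Q \<subseteq> P \<Longrightarrow> nc Q"
  unfolding nc_def by blast

lemma nc_insert_single: assumes "nc Q" shows "nc (insert {x0} Q)"
proof (rule ncI)
  fix x y z w X Y
  assume h: "x < y" "y < z" "z < w" "X \<in> insert {x0} Q" "Y \<in> insert {x0} Q"
    "x \<in> X" "z \<in> X" "y \<in> Y" "w \<in> Y"
  have "X \<noteq> {x0}" using h(1,2,6,7) by auto
  moreover have "Y \<noteq> {x0}" using h(2,3,8,9) by auto
  ultimately have "X \<in> Q" "Y \<in> Q" using h(4,5) by auto
  then show "X = Y" using ncD[OF assms h(1,2,3) _ _ h(6-9)] by blast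
qed

lemma mk_split:
  assumes p: "partition_on {a..<b} P" and tk: "0 < t * k"
  shows "mk t k P = nf t k a P + (if card (blk a P) = t * k then 1 else 0)"
proof (cases "a < b")
  case True
  define B0 where "B0 = blk a P"
  have B0: "B0 \<in> P" "a \<in> B0" using blk_in[OF p] True by (auto simp: B0_def)
  have other: "X = B0" if "X \<in> P" "a \<in> X" for X using part_disj[OF p that(1) B0(1) that(2) B0(2)] .
  have fin: "finite P" using finite_elements[OF _ p] by simp
  define S1 where "S1 = {B\<in>P. a \<notin> B \<and> card B = t * k}"
  define S2 where "S2 = (if card B0 = t * k then {B0} else {})"
  have e: "{B\<in>P. card B = t * k} = S1 \<union> S2"
  proof
    show "{B\<in>P. card B = t * k} \<subseteq> S1 \<union> S2"
    proof
      fix B assume B: "B \<in> {B\<in>P. card B = t * k}"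
      show "B \<in> S1 \<union> S2"
      proof (cases "a \<in> B")
        case True then have "B = B0" using other B by blast
        then show ?thesis using B by (simp add: S2_def)
      next
        case False then show ?thesis using B by (simp add: S1_def)
      qed
    qed
    show "S1 \<union> S2 \<subseteq> {B\<in>P. card B = t * k}" using B0 by (auto simp: S1_def S2_def)
  qed
  have fS1: "finite S1" using fin by (simp add: S1_def)
  have dj: "S1 \<inter> S2 = {}" using B0 by (auto simp: S1_def S2_def)
  have "card (S1 \<union> S2) = card S1 + card S2" using card_Un_disjoint[OF fS1 _ dj] by (simp add: S2_def)
  then show ?thesis by (simp add: mk_def nf_def B0_def e S1_def S2_def)
next
  case False
  have "blk a P = {}" using blk_empty[OF p] False by simp
  moreover have "{B\<in>P. card B = t * k} = {B\<in>P. a \<notin> B \<and> card B = t * k}"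
  proof -
    have "a \<notin> B" if "B \<in> P" for B using part_sub[OF p that] False by auto
    then show ?thesis by blast
  qed
  ultimately show ?thesis using tk by (simp add: mk_def nf_def)
qed

lemma nth_elem: "finite (B::nat set) \<Longrightarrow> s < card B \<Longrightarrow> \<exists>x\<in>B. card {y\<in>B. y < x} = s"
proof (induction s)
  case 0
  then have "B \<noteq> {}" by auto
  then have "Min B \<in> B" "{y\<in>B. y < Min B} = {}" using 0 by auto
  then show ?case by (metis card.empty)
next
  case (Suc s)
  then obtain x where x: "x \<in> B" "card {y\<in>B. y < x} = s" by auto
  define R where "R = {y\<in>B. x < y}"
  have Be: "B = {y\<in>B. y < x} \<union> insert x R" using x by (auto simp: R_def)
  have fR: "finite R" using Suc.prems by (simp add: R_def)
  have "card ({y\<in>B. y < x} \<union> insert x R) = card {y\<in>B. y < x} + card (insert x R)"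
    by (rule card_Un_disjoint) (use Suc.prems fR in \<open>auto simp: R_def\<close>)
  moreover have "card (insert x R) = Suc (card R)" using fR by (simp add: R_def)
  ultimately have "card B = s + Suc (card R)" using Be x by simp
  then have "R \<noteq> {}" using Suc.prems by auto
  define x' where "x' = Min R"
  have x': "x' \<in> R" "\<And>y. y \<in> R \<Longrightarrow> x' \<le> y" using fR \<open>R \<noteq> {}\<close> by (auto simp: x'_def)
  have "{y\<in>B. y < x'} = insert x {y\<in>B. y < x}"
  proof (rule set_eqI)
    fix y show "y \<in> {y\<in>B. y < x'} \<longleftrightarrow> y \<in> insert x {y\<in>B. y < x}"
      using x'(2)[of y] x'(1) x by (cases "x < y") (auto simp: R_def)
  qed
  then have "card {y\<in>B. y < x'} = Suc s" using x Suc.prems by simp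
  then show ?case using x' by (auto simp: R_def)
qed

subsection \<open>Singleton removal\<close>

lemma single_facts: assumes "P \<in> cls k a b {1}"
  shows "{a} \<in> P" "a < b" "\<And>X. X \<in> P \<Longrightarrow> X \<noteq> {a} \<Longrightarrow> a \<notin> X"
proof -
  have p: "partition_on {a..<b} P" and c: "card (blk a P) = 1" using assms by (auto simp: cls_def FF_def)
  show ab: "a < b"
  proof (rule ccontr)
    assume "\<not> a < b" then have "blk a P = {}" using blk_empty[OF p] by simp
    then show False using c by simp
  qed
  have "blk a P \<in> P" "a \<in> blk a P" using blk_in[OF p] ab by auto
  moreover then have "blk a P = {a}" using c by (metis card_1_singletonE singletonD)
  ultimately show "{a} \<in> P" by simp
  then show "\<And>X. X \<in> P \<Longrightarrow> X \<noteq> {a} \<Longrightarrow> a \<notin> X" using part_disj[OF p] by blast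
qed

lemma single_to: assumes P: "P \<in> cls k a b {1}" shows "P - {{a}} \<in> cls k (Suc a) b {u. k dvd u}"
proof -
  note f = single_facts[OF P]
  have p: "partition_on {a..<b} P" and n: "nc P" and dv: "\<And>B. B \<in> P \<Longrightarrow> a \<notin> B \<Longrightarrow> k dvd card B"
    using P by (auto simp: cls_def FF_def)
  have eq: "P = insert {a} (P - {{a}})" using f(1) by auto
  have dj: "disjnt {a} (\<Union>(P - {{a}}))" using f(3) by (auto simp: disjnt_def)
  have "partition_on {a..<b} (insert {a} (P - {{a}}))" using p eq by simp
  then have p2: "partition_on ({a..<b} - {a}) (P - {{a}})" using partition_on_insert[OF dj] by blast
  have "{a..<b} - {a} = {Suc a..<b}" by auto
  with p2 have p3: "partition_on {Suc a..<b} (P - {{a}})" by simp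
  have n3: "nc (P - {{a}})" using nc_subset[OF n] by blast
  have d3: "\<forall>B\<in>P - {{a}}. Suc a \<notin> B \<longrightarrow> k dvd card B" using dv f(3) by blast
  have "k dvd card (blk (Suc a) (P - {{a}}))"
  proof (cases "Suc a < b")
    case True
    then have "blk (Suc a) (P - {{a}}) \<in> P - {{a}}" using blk_in[OF p3] by auto
    then show ?thesis using dv f(3) by blast
  next
    case False
    then have "blk (Suc a) (P - {{a}}) = {}" using blk_empty[OF p3] by simp
    then show ?thesis by simp
  qed
  then show ?thesis using p3 n3 d3 by (simp add: cls_def FF_def)
qed

lemma single_from: assumes Q: "Q \<in> cls k (Suc a) b {u. k dvd u}" and ab: "a < b"
  shows "insert {a} Q \<in> cls k a b {1}" "{a} \<notin> Q"
proof -
  have p: "partition_on {Suc a..<b} Q" and n: "nc Q" and dv: "\<And>B. B \<in> Q \<Longrightarrow> Suc a \<notin> B \<Longrightarrow> k dvd card B"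
    and c: "k dvd card (blk (Suc a) Q)" using Q by (auto simp: cls_def FF_def)
  have "a \<notin> {Suc a..<b}" by simp
  then have na: "a \<notin> \<Union>Q" using partition_onD1[OF p] by simp
  then have dj: "disjnt {a} (\<Union>Q)" by (simp add: disjnt_def)
  have "{a..<b} - {a} = {Suc a..<b}" by auto
  then have p2: "partition_on {a..<b} (insert {a} Q)" using partition_on_insert[OF dj] p ab by auto
  have d2: "\<forall>B\<in>insert {a} Q. a \<notin> B \<longrightarrow> k dvd card B"
  proof (intro ballI impI)
    fix B assume "B \<in> insert {a} Q" "a \<notin> B"
    then have B: "B \<in> Q" by auto
    show "k dvd card B"
    proof (cases "Suc a \<in> B")
      case True then show ?thesis using blk_eq[OF p B True] c by simp
    next
      case False then show ?thesis using dv B by simp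
    qed
  qed
  have "blk a (insert {a} Q) = {a}" using blk_eq[OF p2] by simp
  then show "insert {a} Q \<in> cls k a b {1}" using p2 nc_insert_single[OF n] d2 by (simp add: cls_def FF_def)
  show "{a} \<notin> Q" using na by auto
qed

lemma single_bij: assumes "a < b"
  shows "bij_betw (\<lambda>P. P - {{a}}) (cls k a b {1}) (cls k (Suc a) b {u. k dvd u})"
proof (rule bij_betw_byWitness[where f'="insert {a}"])
  show "\<forall>P\<in>cls k a b {1}. insert {a} (P - {{a}}) = P" using single_facts(1) by blast
  show "\<forall>Q\<in>cls k (Suc a) b {u. k dvd u}. insert {a} Q - {{a}} = Q" using single_from(2)[OF _ assms] by blast
  show "(\<lambda>P. P - {{a}}) ` cls k a b {1} \<subseteq> cls k (Suc a) b {u. k dvd u}" using single_to by blast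
  show "insert {a} ` cls k (Suc a) b {u. k dvd u} \<subseteq> cls k a b {1}" using single_from(1)[OF _ assms] by blast
qed

lemma single_nf: assumes "P \<in> cls k a b {1}" shows "nf t k a P = mk t k (P - {{a}})"
proof -
  have "{B\<in>P. a \<notin> B \<and> card B = t * k} = {B\<in>P - {{a}}. card B = t * k}"
    using single_facts[OF assms] by auto
  then show ?thesis by (simp add: nf_def mk_def)
qed

subsection \<open>Merging\<close>

definition mrg :: "nat \<Rightarrow> nat \<Rightarrow> nat set set \<Rightarrow> nat set set \<Rightarrow> nat set set" where
  "mrg a c R S = {B\<in>R \<union> S. a \<notin> B \<and> c \<notin> B} \<union> {blk a R \<union> blk c S}"

definition rst :: "nat set set \<Rightarrow> nat set \<Rightarrow> nat set set" where
  "rst P A = (\<inter>) A ` P - {{}}"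

lemma mem_rst: "W \<in> rst P A \<longleftrightarrow> (\<exists>X\<in>P. W = A \<inter> X) \<and> W \<noteq> {}"
  unfolding rst_def by blast

context
  fixes k a b c :: nat and R S :: "nat set set"
  assumes ac: "a < c" and cb: "c \<le> b" and R: "R \<in> FF k a c" and S: "S \<in> FF k c b"
begin

lemma pR: "partition_on {a..<c} R" using R by (simp add: FF_def)
lemma pS: "partition_on {c..<b} S" using S by (simp add: FF_def)
lemma BR: "blk a R \<in> R" "a \<in> blk a R" using blk_in[OF pR] ac by auto
lemma subR: assumes "X \<in> R" "x \<in> X" shows "a \<le> x \<and> x < c"
proof -
  have "x \<in> {a..<c}" using part_sub[OF pR assms(1)] assms(2) by blast
  then show ?thesis by simp
qed
lemma subS: assumes "Y \<in> S" "y \<in> Y" shows "c \<le> y \<and> y < b"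
proof -
  have "y \<in> {c..<b}" using part_sub[OF pS assms(1)] assms(2) by blast
  then show ?thesis by simp
qed
lemma neR: "X \<in> R \<Longrightarrow> X \<noteq> {}" using part_ne[OF pR] by auto
lemma neS: "Y \<in> S \<Longrightarrow> Y \<noteq> {}" using part_ne[OF pS] by auto
lemma aR: "X \<in> R \<Longrightarrow> a \<in> X \<Longrightarrow> X = blk a R" using blk_eq[OF pR] by auto
lemma cS: "Y \<in> S \<Longrightarrow> c \<in> Y \<Longrightarrow> Y = blk c S" using blk_eq[OF pS] by auto
lemma BRsub: "x \<in> blk a R \<Longrightarrow> a \<le> x \<and> x < c" using subR BR by blast
lemma BSsub: "x \<in> blk c S \<Longrightarrow> c \<le> x \<and> x < b"
  unfolding blk_def using subS by blast
lemma BS_in: "x \<in> blk c S \<Longrightarrow> blk c S \<in> S \<and> c \<in> blk c S"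
proof -
  assume "x \<in> blk c S"
  then have "c < b" using BSsub by fastforce
  then show ?thesis using blk_in[OF pS] by auto
qed
lemma S_empty: "\<not> c < b \<Longrightarrow> S = {}" using pS cb by (simp add: partition_on_empty)
lemma BS_empty: "\<not> c < b \<Longrightarrow> blk c S = {}" using S_empty by (simp add: blk_def)
lemma BS_c: "c < b \<Longrightarrow> blk c S \<in> S \<and> c \<in> blk c S" using blk_in[OF pS] by auto
lemma ncR: "nc R" using R by (simp add: FF_def)
lemma ncS: "nc S" using S by (simp add: FF_def)
lemma disR: "X \<in> R \<Longrightarrow> Y \<in> R \<Longrightarrow> x \<in> X \<Longrightarrow> x \<in> Y \<Longrightarrow> X = Y" using part_disj[OF pR] by blast
lemma disS: "X \<in> S \<Longrightarrow> Y \<in> S \<Longrightarrow> x \<in> X \<Longrightarrow> x \<in> Y \<Longrightarrow> X = Y" using part_disj[OF pS] by blast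

lemma mem_M: "Z \<in> mrg a c R S \<longleftrightarrow> (Z \<in> R \<and> a \<notin> Z) \<or> (Z \<in> S \<and> c \<notin> Z) \<or> Z = blk a R \<union> blk c S"
proof -
  have "Z \<in> R \<Longrightarrow> c \<notin> Z" using subR by blast
  moreover have "Z \<in> S \<Longrightarrow> a \<notin> Z" using subS ac by fastforce
  ultimately show ?thesis unfolding mrg_def by blast
qed

lemma M_cases:
  assumes "Z \<in> mrg a c R S"
  obtains (r) "Z \<in> R" "a \<notin> Z" | (s) "Z \<in> S" "c \<notin> Z" | (m) "Z = blk a R \<union> blk c S"
  using assms unfolding mem_M by blast

lemma M_left: assumes "Z \<in> mrg a c R S" "x \<in> Z" "x < c"
  shows "(Z \<in> R \<and> a \<notin> Z) \<or> (Z = blk a R \<union> blk c S \<and> x \<in> blk a R)"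
  using assms(1)
proof (cases rule: M_cases)
  case s then show ?thesis using subS[OF s(1) assms(2)] assms(3) by simp
next
  case m then show ?thesis using BSsub[of x] assms(2,3) by auto
qed simp

lemma M_right: assumes "Z \<in> mrg a c R S" "x \<in> Z" "\<not> x < c"
  shows "(Z \<in> S \<and> c \<notin> Z) \<or> (Z = blk a R \<union> blk c S \<and> x \<in> blk c S)"
  using assms(1)
proof (cases rule: M_cases)
  case r then show ?thesis using subR[OF r(1) assms(2)] assms(3) by simp
next
  case m then show ?thesis using BRsub[of x] assms(2,3) by auto
qed simp

lemma M_part: "partition_on {a..<b} (mrg a c R S)"
proof (rule partition_onI)
  show "\<Union>(mrg a c R S) = {a..<b}"
  proof
    show "\<Union>(mrg a c R S) \<subseteq> {a..<b}"
    proof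
      fix x assume "x \<in> \<Union>(mrg a c R S)"
      then obtain Z where Z: "Z \<in> mrg a c R S" "x \<in> Z" by blast
      have "a \<le> x \<and> x < b"
      proof (cases "x < c")
        case True
        then show ?thesis using M_left[OF Z True] subR[of Z x] BRsub[of x] Z(2) cb by auto
      next
        case False
        then show ?thesis using M_right[OF Z False] subS[of Z x] BSsub[of x] Z(2) ac by auto
      qed
      then show "x \<in> {a..<b}" by simp
    qed
    show "{a..<b} \<subseteq> \<Union>(mrg a c R S)"
    proof
      fix x assume x: "x \<in> {a..<b}"
      show "x \<in> \<Union>(mrg a c R S)"
      proof (cases "x < c")
        case True
        then have "x \<in> {a..<c}" using x by simp
        then obtain X where X: "X \<in> R" "x \<in> X" using part_cov[OF pR] by blast
        show ?thesis
        proof (cases "a \<in> X")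
          case True then have "X = blk a R" using aR X by simp
          then show ?thesis using X by (auto simp: mem_M)
        next
          case False then show ?thesis using X by (auto simp: mem_M)
        qed
      next
        case False
        then have "x \<in> {c..<b}" using x by simp
        then obtain Y where Y: "Y \<in> S" "x \<in> Y" using part_cov[OF pS] by blast
        show ?thesis
        proof (cases "c \<in> Y")
          case True then have "Y = blk c S" using cS Y by simp
          then show ?thesis using Y by (auto simp: mem_M)
        next
          case False then show ?thesis using Y by (auto simp: mem_M)
        qed
      qed
    qed
  qed
next
  fix p q assume p: "p \<in> mrg a c R S" and q: "q \<in> mrg a c R S" and pq: "p \<noteq> q"
  show "disjnt p q"
  proof (rule ccontr)
    assume "\<not> disjnt p q"
    then obtain x where x: "x \<in> p" "x \<in> q" by (auto simp: disjnt_def)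
    show False
    proof (cases "x < c")
      case True
      note A = M_left[OF p x(1) True] and B = M_left[OF q x(2) True]
      show False
      proof (cases "p \<in> R \<and> a \<notin> p")
        case pR': True
        show False
        proof (cases "q \<in> R \<and> a \<notin> q")
          case True then show False using disR[of p q x] pR' x pq by blast
        next
          case False
          then have "x \<in> blk a R" using B by blast
          then have "p = blk a R" using disR[of p "blk a R" x] pR' x BR by blast
          then show False using pR' BR by blast
        qed
      next
        case pU: False
        then have pU': "p = blk a R \<union> blk c S" using A by blast
        show False
        proof (cases "q \<in> R \<and> a \<notin> q")
          case qR': True
          have "x \<in> blk a R" using A pU by blast
          then have "q = blk a R" using disR[of q "blk a R" x] qR' x BR by blast
          then show False using qR' BR by blast
        next
          case False
          then show False using B pU' pq by blast
        qed
      qed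
    next
      case False
      note A = M_right[OF p x(1) False] and B = M_right[OF q x(2) False]
      show False
      proof (cases "p \<in> S \<and> c \<notin> p")
        case pS': True
        show False
        proof (cases "q \<in> S \<and> c \<notin> q")
          case True then show False using disS[of p q x] pS' x pq by blast
        next
          case False
          then have xb: "x \<in> blk c S" using B by blast
          then have "blk c S \<in> S" "c \<in> blk c S" using BS_in by auto
          then have "p = blk c S" using disS[of p "blk c S" x] pS' x xb by blast
          then show False using pS' \<open>c \<in> blk c S\<close> by blast
        qed
      next
        case pU: False
        then have pU': "p = blk a R \<union> blk c S" using A by blast
        show False
        proof (cases "q \<in> S \<and> c \<notin> q")
          case qS': True
          have xb: "x \<in> blk c S" using A pU by blast
          then have "blk c S \<in> S" "c \<in> blk c S" using BS_in by auto
          then have "q = blk c S" using disS[of q "blk c S" x] qS' x xb by blast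
          then show False using qS' \<open>c \<in> blk c S\<close> by blast
        next
          case False
          then show False using B pU' pq by blast
        qed
      qed
    qed
  qed
next
  show "{} \<notin> mrg a c R S"
  proof
    assume "{} \<in> mrg a c R S"
    then show False
    proof (cases rule: M_cases)
      case r then show ?thesis using neR by blast
    next
      case s then show ?thesis using neS by blast
    next
      case m then show ?thesis using BR by blast
    qed
  qed
qed

lemma M_nc: "nc (mrg a c R S)"
proof (rule ncI)
  fix x y z w X Y
  assume o: "x < y" "y < z" "z < w" and X: "X \<in> mrg a c R S" and Y: "Y \<in> mrg a c R S"
    and m: "x \<in> X" "z \<in> X" "y \<in> Y" "w \<in> Y"
  show "X = Y"
  proof (rule ccontr)
    assume ne: "X \<noteq> Y"
    show False
      using X
    proof (cases rule: M_cases)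
      case Xr: r
      have xc: "a \<le> x" "x < c" "z < c" using subR[OF Xr(1) m(1)] subR[OF Xr(1) m(2)] by auto
      show False using Y
      proof (cases rule: M_cases)
        case r then show False using ncD[OF ncR o Xr(1) r(1) m] ne by blast
      next
        case s then show False using subS[OF s(1) m(3)] xc o by simp
      next
        case mm: m
        have yc: "y < c" using o xc by simp
        have yB: "y \<in> blk a R" using m(3) mm BSsub[of y] yc by auto
        have "a \<noteq> x" using Xr m(1) by blast
        then have "a < x" using xc by simp
        then have "blk a R = X" using ncD[OF ncR _ o(1) o(2) BR(1) Xr(1) BR(2) yB m(1) m(2)] by blast
        then show False using Xr BR by blast
      qed
    next
      case Xs: s
      have xc: "c \<le> x" using subS[OF Xs(1) m(1)] by auto
      show False using Y
      proof (cases rule: M_cases)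
        case r then show False using subR[OF r(1) m(3)] xc o by simp
      next
        case s then show False using ncD[OF ncS o Xs(1) s(1) m] ne by blast
      next
        case mm: m
        have "\<not> y < c" "\<not> w < c" using xc o by auto
        then have yB: "y \<in> blk c S" and wB: "w \<in> blk c S" using m(3,4) mm BRsub[of y] BRsub[of w] by auto
        then have "blk c S \<in> S" "c \<in> blk c S" using BS_in by auto
        then have "X = blk c S" using ncD[OF ncS o Xs(1) _ m(1) m(2) yB wB] by blast
        then show False using Xs \<open>c \<in> blk c S\<close> by blast
      qed
    next
      case Xm: m
      show False using Y
      proof (cases rule: M_cases)
        case Yr: r
        have wc: "w < c" using subR[OF Yr(1) m(4)] by simp
        then have "z < c" "x < c" using o by auto
        then have zB: "z \<in> blk a R" and xB: "x \<in> blk a R"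
          using m(1,2) Xm BSsub[of z] BSsub[of x] by auto
        then have "blk a R = Y" using ncD[OF ncR o BR(1) Yr(1) xB zB m(3) m(4)] by blast
        then show False using Yr BR by blast
      next
        case Ys: s
        have yc: "c \<le> y" using subS[OF Ys(1) m(3)] by simp
        then have "\<not> z < c" using o by simp
        then have zB: "z \<in> blk c S" using m(2) Xm BRsub[of z] by auto
        then have BS: "blk c S \<in> S" "c \<in> blk c S" using BS_in by auto
        have "c \<noteq> y" using Ys m(3) by blast
        then have cy: "c < y" using yc by simp
        show False
        proof (cases "x \<in> blk c S")
          case True
          then have "blk c S = Y" using ncD[OF ncS o BS(1) Ys(1) True zB m(3) m(4)] by blast
          then show False using Ys BS by blast
        next
          case False
          then have "blk c S = Y" using ncD[OF ncS cy o(2) o(3) BS(1) Ys(1) BS(2) zB m(3) m(4)] by blast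
          then show False using Ys BS by blast
        qed
      next
        case m then show False using Xm ne by simp
      qed
    qed
  qed
qed

lemma U_mem: "blk a R \<union> blk c S \<in> mrg a c R S" by (simp add: mem_M)

lemma M_FF: "mrg a c R S \<in> FF k a b"
proof -
  have "\<forall>B\<in>mrg a c R S. a \<notin> B \<longrightarrow> k dvd card B"
  proof (intro ballI impI)
    fix B assume B: "B \<in> mrg a c R S" and aB: "a \<notin> B"
    show "k dvd card B" using B
    proof (cases rule: M_cases)
      case r then show ?thesis using FF_dvd[OF R] by blast
    next
      case s then show ?thesis using FF_dvd[OF S] by blast
    next
      case m then show ?thesis using aB BR by blast
    qed
  qed
  then show ?thesis using M_part M_nc by (simp add: FF_def)
qed

lemma M_blk: "blk a (mrg a c R S) = blk a R \<union> blk c S"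
  using blk_eq[OF M_part U_mem] BR by blast

lemma U_card: "card (blk a R \<union> blk c S) = card (blk a R) + card (blk c S)"
proof (rule card_Un_disjoint)
  show "finite (blk a R)" using blk_fin[OF R] .
  show "finite (blk c S)" using blk_fin[OF S] .
  show "blk a R \<inter> blk c S = {}" using BRsub BSsub by fastforce
qed

lemma U_left: "(blk a R \<union> blk c S) \<inter> {a..<c} = blk a R"
  using BRsub BSsub by fastforce

lemma U_c: "c \<in> blk a R \<union> blk c S \<or> c = b"
  using BS_c cb by (cases "c < b") auto

lemma M_nf: "nf t k a (mrg a c R S) = nf t k a R + nf t k c S"
proof -
  have e: "{B\<in>mrg a c R S. a \<notin> B \<and> card B = t * k} =
    {B\<in>R. a \<notin> B \<and> card B = t * k} \<union> {B\<in>S. c \<notin> B \<and> card B = t * k}"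
  proof -
    have "a \<in> blk a R \<union> blk c S" using BR by blast
    moreover have "a \<notin> X" if "X \<in> S" for X using subS[OF that] ac by fastforce
    ultimately show ?thesis by (auto simp: mem_M)
  qed
  have fR: "finite R" using finite_elements[OF _ pR] by simp
  have fS: "finite S" using finite_elements[OF _ pS] by simp
  have dj: "{B\<in>R. a \<notin> B \<and> card B = t * k} \<inter> {B\<in>S. c \<notin> B \<and> card B = t * k} = {}"
  proof -
    have "X \<notin> S" if XR: "X \<in> R" for X
    proof
      assume "X \<in> S"
      obtain x where "x \<in> X" using neR[OF XR] by auto
      then show False using subR[OF XR] subS[OF \<open>X \<in> S\<close>] by fastforce
    qed
    then show ?thesis by blast
  qed
  show ?thesis unfolding nf_def e by (rule card_Un_disjoint) (use fR fS dj in auto)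
qed

lemma M_rst_left: "rst (mrg a c R S) {a..<c} = R"
proof (rule set_eqI)
  fix W show "W \<in> rst (mrg a c R S) {a..<c} \<longleftrightarrow> W \<in> R"
  proof
    assume "W \<in> rst (mrg a c R S) {a..<c}"
    then obtain Z where Z: "Z \<in> mrg a c R S" "W = {a..<c} \<inter> Z" "W \<noteq> {}" by (auto simp: mem_rst)
    show "W \<in> R" using Z(1)
    proof (cases rule: M_cases)
      case r
      have "Z \<subseteq> {a..<c}" using subR[OF r(1)] by auto
      then show ?thesis using Z(2) r by (simp add: Int_absorb1)
    next
      case s
      have "x \<notin> {a..<c}" if "x \<in> Z" for x using subS[OF s(1) that] by simp
      then have "{a..<c} \<inter> Z = {}" by blast
      then show ?thesis using Z(2,3) by simp
    next
      case m
      have "W = blk a R" using Z(2) m U_left by (simp add: Int_commute)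
      then show ?thesis using BR by simp
    qed
  next
    assume W: "W \<in> R"
    show "W \<in> rst (mrg a c R S) {a..<c}"
    proof (cases "a \<in> W")
      case True
      then have "W = blk a R" using aR W by simp
      then have "W = {a..<c} \<inter> (blk a R \<union> blk c S)" using U_left by (simp add: Int_commute)
      then show ?thesis unfolding mem_rst using U_mem neR[OF W] by blast
    next
      case False
      then have "W \<in> mrg a c R S" using W by (simp add: mem_M)
      moreover have "W = {a..<c} \<inter> W" using subR[OF W] by auto
      ultimately show ?thesis unfolding mem_rst using neR[OF W] by blast
    qed
  qed
qed

lemma M_rst_right: "rst (mrg a c R S) {c..<b} = S"
proof (rule set_eqI)
  fix W show "W \<in> rst (mrg a c R S) {c..<b} \<longleftrightarrow> W \<in> S"
  proof
    assume "W \<in> rst (mrg a c R S) {c..<b}"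
    then obtain Z where Z: "Z \<in> mrg a c R S" "W = {c..<b} \<inter> Z" "W \<noteq> {}" by (auto simp: mem_rst)
    show "W \<in> S" using Z(1)
    proof (cases rule: M_cases)
      case r
      have "x \<notin> {c..<b}" if "x \<in> Z" for x using subR[OF r(1) that] by simp
      then have "{c..<b} \<inter> Z = {}" by blast
      then show ?thesis using Z(2,3) by simp
    next
      case s
      have "Z \<subseteq> {c..<b}" using subS[OF s(1)] by auto
      then show ?thesis using Z(2) s by (simp add: Int_absorb1)
    next
      case m
      have "{c..<b} \<inter> (blk a R \<union> blk c S) = blk c S" using BRsub BSsub by fastforce
      then have "W = blk c S" using Z(2) m by simp
      then show ?thesis using Z(3) BS_in by blast
    qed
  next
    assume W: "W \<in> S"
    show "W \<in> rst (mrg a c R S) {c..<b}"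
    proof (cases "c \<in> W")
      case True
      then have "W = blk c S" using cS W by simp
      moreover have "{c..<b} \<inter> (blk a R \<union> blk c S) = blk c S" using BRsub BSsub by fastforce
      ultimately have "W = {c..<b} \<inter> (blk a R \<union> blk c S)" by simp
      then show ?thesis unfolding mem_rst using U_mem neS[OF W] by blast
    next
      case False
      then have "W \<in> mrg a c R S" using W by (simp add: mem_M)
      moreover have "W = {c..<b} \<inter> W" using subS[OF W] by auto
      ultimately show ?thesis unfolding mem_rst using neS[OF W] by blast
    qed
  qed
qed

end

lemma nc_rst: assumes "nc P" shows "nc (rst P A)"
proof (rule ncI)
  fix x y z w X Y
  assume o: "x < y" "y < z" "z < w" and X: "X \<in> rst P A" and Y: "Y \<in> rst P A"
    and m: "x \<in> X" "z \<in> X" "y \<in> Y" "w \<in> Y"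
  obtain X0 where X0: "X0 \<in> P" "X = A \<inter> X0" using X by (auto simp: mem_rst)
  obtain Y0 where Y0: "Y0 \<in> P" "Y = A \<inter> Y0" using Y by (auto simp: mem_rst)
  have "X0 = Y0" using ncD[OF assms o X0(1) Y0(1)] m X0(2) Y0(2) by blast
  then show "X = Y" using X0 Y0 by simp
qed

context
  fixes k a b c :: nat and P :: "nat set set"
  assumes ac: "a < c" and cb: "c \<le> b" and P: "P \<in> FF k a b" and cB: "c \<in> blk a P \<or> c = b"
begin

lemma pP: "partition_on {a..<b} P" using P by (simp add: FF_def)
lemma BP: "blk a P \<in> P" "a \<in> blk a P" using blk_in[OF pP] ac cb by auto
lemma subP: assumes "X \<in> P" "x \<in> X" shows "a \<le> x \<and> x < b"
proof -
  have "x \<in> {a..<b}" using part_sub[OF pP assms(1)] assms(2) by blast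
  then show ?thesis by simp
qed
lemma notaP: "X \<in> P \<Longrightarrow> X \<noteq> blk a P \<Longrightarrow> a \<notin> X"
  using part_disj[OF pP _ BP(1) _ BP(2)] by blast
lemma cBP: "c < b \<Longrightarrow> c \<in> blk a P" using cB by auto

lemma straddle: assumes X: "X \<in> P" "X \<noteq> blk a P" shows "X \<subseteq> {a..<c} \<or> X \<subseteq> {c..<b}"
proof (rule ccontr)
  assume "\<not> ?thesis"
  then obtain x y where xy: "x \<in> X" "y \<in> X" "x < c" "\<not> y < c" using subP[OF X(1)] by fastforce
  have yb: "y < b" using subP[OF X(1) xy(2)] by simp
  then have cb': "c < b" using xy by simp
  then have cP: "c \<in> blk a P" using cBP by simp
  have "c \<noteq> y" using part_disj[OF pP X(1) BP(1) xy(2)] cP X(2) by blast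
  then have cy: "c < y" using xy by simp
  have "a \<noteq> x" using notaP[OF X] xy by blast
  then have ax: "a < x" using subP[OF X(1) xy(1)] by simp
  have "blk a P = X" using ncD[OF FF_nc[OF P] ax xy(3) cy BP(1) X(1) BP(2) cP xy(1) xy(2)] .
  then show False using X by simp
qed

lemma rl_FF: "rst P {a..<c} \<in> FF k a c"
proof -
  have p0: "partition_on ({a..<c} \<inter> {a..<b}) ((\<inter>) {a..<c} ` P - {{}})"
    by (rule partition_on_restrict[OF pP])
  have e: "{a..<c} \<inter> {a..<b} = {a..<c}" using cb by auto
  have p: "partition_on {a..<c} (rst P {a..<c})" using p0 unfolding e rst_def .
  have "\<forall>Z\<in>rst P {a..<c}. a \<notin> Z \<longrightarrow> k dvd card Z"
  proof (intro ballI impI)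
    fix Z assume Z: "Z \<in> rst P {a..<c}" "a \<notin> Z"
    then obtain X where X: "X \<in> P" "Z = {a..<c} \<inter> X" "Z \<noteq> {}" by (auto simp: mem_rst)
    have XB: "X \<noteq> blk a P" using X(2) Z(2) BP(2) ac by auto
    have "X \<subseteq> {a..<c}" using straddle[OF X(1) XB] X(2,3) by auto
    then have "Z = X" using X(2) by auto
    then show "k dvd card Z" using FF_dvd[OF P X(1) notaP[OF X(1) XB]] by simp
  qed
  then show ?thesis using p nc_rst[OF FF_nc[OF P]] by (simp add: FF_def)
qed

lemma rl_blk: "blk a (rst P {a..<c}) = blk a P \<inter> {a..<c}"
proof -
  have "blk a P \<inter> {a..<c} \<in> rst P {a..<c}" using BP ac by (auto simp: mem_rst)
  moreover have "a \<in> blk a P \<inter> {a..<c}" using BP ac by auto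
  ultimately show ?thesis using blk_eq[OF FF_part[OF rl_FF]] by blast
qed

lemma rr_FF: "rst P {c..<b} \<in> FF k c b"
proof -
  have p0: "partition_on ({c..<b} \<inter> {a..<b}) ((\<inter>) {c..<b} ` P - {{}})"
    by (rule partition_on_restrict[OF pP])
  have e: "{c..<b} \<inter> {a..<b} = {c..<b}" using ac by auto
  have p: "partition_on {c..<b} (rst P {c..<b})" using p0 unfolding e rst_def .
  have "\<forall>Z\<in>rst P {c..<b}. c \<notin> Z \<longrightarrow> k dvd card Z"
  proof (intro ballI impI)
    fix Z assume Z: "Z \<in> rst P {c..<b}" "c \<notin> Z"
    then obtain X where X: "X \<in> P" "Z = {c..<b} \<inter> X" "Z \<noteq> {}" by (auto simp: mem_rst)
    have cb': "c < b" using X(2,3) by auto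
    have XB: "X \<noteq> blk a P" using X(2,3) Z(2) cBP[OF cb'] cb' by auto
    have "X \<subseteq> {c..<b}" using straddle[OF X(1) XB] X(2,3) by auto
    then have "Z = X" using X(2) by auto
    then show "k dvd card Z" using FF_dvd[OF P X(1) notaP[OF X(1) XB]] by simp
  qed
  then show ?thesis using p nc_rst[OF FF_nc[OF P]] by (simp add: FF_def)
qed

lemma rr_blk: "blk c (rst P {c..<b}) = blk a P \<inter> {c..<b}"
proof (cases "c < b")
  case True
  have "blk a P \<inter> {c..<b} \<in> rst P {c..<b}" using BP cBP[OF True] True by (auto simp: mem_rst)
  moreover have "c \<in> blk a P \<inter> {c..<b}" using cBP[OF True] True by auto
  ultimately show ?thesis using blk_eq[OF FF_part[OF rr_FF]] by blast
next
  case False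
  then show ?thesis using blk_empty[OF FF_part[OF rr_FF]] by auto
qed

lemma mrg_rst: "mrg a c (rst P {a..<c}) (rst P {c..<b}) = P"
proof (rule set_eqI)
  fix Z
  have U: "blk a (rst P {a..<c}) \<union> blk c (rst P {c..<b}) = blk a P"
    unfolding rl_blk rr_blk using subP[OF BP(1)] by auto
  show "Z \<in> mrg a c (rst P {a..<c}) (rst P {c..<b}) \<longleftrightarrow> Z \<in> P"
    unfolding mem_M[OF ac cb rl_FF rr_FF] U
  proof
    assume "Z \<in> rst P {a..<c} \<and> a \<notin> Z \<or> Z \<in> rst P {c..<b} \<and> c \<notin> Z \<or> Z = blk a P"
    then consider (l) "Z \<in> rst P {a..<c}" "a \<notin> Z" | (r) "Z \<in> rst P {c..<b}" "c \<notin> Z" | (m) "Z = blk a P"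
      by blast
    then show "Z \<in> P"
    proof cases
      case l
      then obtain X where X: "X \<in> P" "Z = {a..<c} \<inter> X" "Z \<noteq> {}" by (auto simp: mem_rst)
      have XB: "X \<noteq> blk a P" using X(2) l(2) BP(2) ac by auto
      have "X \<subseteq> {a..<c}" using straddle[OF X(1) XB] X(2,3) by auto
      then show ?thesis using X by (simp add: Int_absorb1)
    next
      case r
      then obtain X where X: "X \<in> P" "Z = {c..<b} \<inter> X" "Z \<noteq> {}" by (auto simp: mem_rst)
      have cb': "c < b" using X(2,3) by auto
      have XB: "X \<noteq> blk a P" using X(2,3) r(2) cBP[OF cb'] cb' by auto
      have "X \<subseteq> {c..<b}" using straddle[OF X(1) XB] X(2,3) by auto
      then show ?thesis using X by (simp add: Int_absorb1)
    next
      case m then show ?thesis using BP by simp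
    qed
  next
    assume Z: "Z \<in> P"
    show "Z \<in> rst P {a..<c} \<and> a \<notin> Z \<or> Z \<in> rst P {c..<b} \<and> c \<notin> Z \<or> Z = blk a P"
    proof (cases "Z = blk a P")
      case False
      have ne: "Z \<noteq> {}" using part_ne[OF pP Z] .
      have aZ: "a \<notin> Z" using notaP[OF Z False] .
      show ?thesis
      proof (cases "Z \<subseteq> {a..<c}")
        case True
        then have "Z = {a..<c} \<inter> Z" by auto
        then show ?thesis using Z ne aZ by (auto simp: mem_rst)
      next
        case nl: False
        then have sub: "Z \<subseteq> {c..<b}" using straddle[OF Z False] by blast
        then have "Z = {c..<b} \<inter> Z" by auto
        moreover have "c \<notin> Z"
        proof
          assume "c \<in> Z"
          then have "c < b" using sub by auto
          then show False using part_disj[OF pP Z BP(1) \<open>c \<in> Z\<close> cBP] False by blast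
        qed
        ultimately show ?thesis using Z ne by (auto simp: mem_rst)
      qed
    qed simp
  qed
qed

lemma card_split_blk: "card (blk a P) = card (blk a P \<inter> {a..<c}) + card (blk a P \<inter> {c..<b})"
proof -
  have "blk a P = (blk a P \<inter> {a..<c}) \<union> (blk a P \<inter> {c..<b})" using subP[OF BP(1)] by auto
  moreover have "card ((blk a P \<inter> {a..<c}) \<union> (blk a P \<inter> {c..<b})) =
      card (blk a P \<inter> {a..<c}) + card (blk a P \<inter> {c..<b})"
    by (rule card_Un_disjoint) (use blk_fin[OF P] in auto)
  ultimately show ?thesis by simp
qed

end

subsection \<open>Splitting at the (s+1)-th element of the first block\<close>

definition Pc :: "nat \<Rightarrow> nat \<Rightarrow> nat \<Rightarrow> nat \<Rightarrow> nat set \<Rightarrow> nat \<Rightarrow> nat set set set" where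
  "Pc k a b s U c = {P \<in> cls k a b ((+) s ` U). card (blk a P \<inter> {a..<c}) = s \<and> (c \<in> blk a P \<or> c = b)}"

lemma Pc_bij: assumes ac: "a < c" and cb: "c \<le> b"
  shows "bij_betw (\<lambda>P. (rst P {a..<c}, rst P {c..<b})) (Pc k a b s U c) (cls k a c {s} \<times> cls k c b U)"
proof (rule bij_betw_byWitness[where f'="\<lambda>(R,S). mrg a c R S"])
  show "\<forall>P\<in>Pc k a b s U c. (\<lambda>(R,S). mrg a c R S) (rst P {a..<c}, rst P {c..<b}) = P"
  proof
    fix P assume "P \<in> Pc k a b s U c"
    then have "P \<in> FF k a b" "c \<in> blk a P \<or> c = b" by (auto simp: Pc_def cls_def)
    then show "(\<lambda>(R,S). mrg a c R S) (rst P {a..<c}, rst P {c..<b}) = P"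
      using mrg_rst[OF ac cb] by simp
  qed
  show "\<forall>x\<in>cls k a c {s} \<times> cls k c b U. (rst ((\<lambda>(R,S). mrg a c R S) x) {a..<c}, rst ((\<lambda>(R,S). mrg a c R S) x) {c..<b}) = x"
  proof
    fix x assume "x \<in> cls k a c {s} \<times> cls k c b U"
    then obtain R S where x: "x = (R, S)" "R \<in> FF k a c" "S \<in> FF k c b" by (auto simp: cls_def)
    show "(rst ((\<lambda>(R,S). mrg a c R S) x) {a..<c}, rst ((\<lambda>(R,S). mrg a c R S) x) {c..<b}) = x"
      using M_rst_left[OF ac cb x(2,3)] M_rst_right[OF ac cb x(2,3)] x(1) by simp
  qed
  show "(\<lambda>P. (rst P {a..<c}, rst P {c..<b})) ` Pc k a b s U c \<subseteq> cls k a c {s} \<times> cls k c b U"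
  proof
    fix y assume "y \<in> (\<lambda>P. (rst P {a..<c}, rst P {c..<b})) ` Pc k a b s U c"
    then obtain P where P: "P \<in> Pc k a b s U c" "y = (rst P {a..<c}, rst P {c..<b})" by blast
    then have F: "P \<in> FF k a b" and cB: "c \<in> blk a P \<or> c = b" and cs: "card (blk a P \<inter> {a..<c}) = s"
      and cu: "card (blk a P) \<in> (+) s ` U" by (auto simp: Pc_def cls_def)
    have "card (blk a (rst P {a..<c})) = s" using rl_blk[OF ac cb F cB] cs by simp
    then have 1: "rst P {a..<c} \<in> cls k a c {s}" using rl_FF[OF ac cb F cB] by (simp add: cls_def)
    have "card (blk c (rst P {c..<b})) = card (blk a P) - s"
      using rr_blk[OF ac cb F cB] card_split_blk[OF ac cb F cB] cs by simp
    then have "card (blk c (rst P {c..<b})) \<in> U" using cu by auto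
    then have 2: "rst P {c..<b} \<in> cls k c b U" using rr_FF[OF ac cb F cB] by (simp add: cls_def)
    show "y \<in> cls k a c {s} \<times> cls k c b U" using 1 2 P(2) by simp
  qed
  show "(\<lambda>(R,S). mrg a c R S) ` (cls k a c {s} \<times> cls k c b U) \<subseteq> Pc k a b s U c"
  proof
    fix y assume "y \<in> (\<lambda>(R,S). mrg a c R S) ` (cls k a c {s} \<times> cls k c b U)"
    then obtain R S where RS: "R \<in> cls k a c {s}" "S \<in> cls k c b U" "y = mrg a c R S" by blast
    then have R: "R \<in> FF k a c" and S: "S \<in> FF k c b" and cR: "card (blk a R) = s"
      and cS: "card (blk c S) \<in> U" by (auto simp: cls_def)
    have "card (blk a y) = s + card (blk c S)"
      using M_blk[OF ac cb R S] U_card[OF ac cb R S] cR RS(3) by simp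
    then have "card (blk a y) \<in> (+) s ` U" using cS by blast
    moreover have "card (blk a y \<inter> {a..<c}) = s" using M_blk[OF ac cb R S] U_left[OF ac cb R S] cR RS(3) by simp
    moreover have "c \<in> blk a y \<or> c = b" using M_blk[OF ac cb R S] U_c[OF ac cb R S] RS(3) by simp
    ultimately show "y \<in> Pc k a b s U c" using M_FF[OF ac cb R S] RS(3) by (simp add: Pc_def cls_def)
  qed
qed

lemma Pc_cover: assumes s: "0 < s"
  shows "cls k a b ((+) s ` U) = (\<Union>c\<in>{a<..b}. Pc k a b s U c)"
proof
  show "(\<Union>c\<in>{a<..b}. Pc k a b s U c) \<subseteq> cls k a b ((+) s ` U)" by (auto simp: Pc_def)
  show "cls k a b ((+) s ` U) \<subseteq> (\<Union>c\<in>{a<..b}. Pc k a b s U c)"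
  proof
    fix P assume P: "P \<in> cls k a b ((+) s ` U)"
    then have F: "P \<in> FF k a b" and cu: "card (blk a P) \<in> (+) s ` U" by (auto simp: cls_def)
    have p: "partition_on {a..<b} P" using FF_part[OF F] .
    have ab: "a < b"
    proof (rule ccontr)
      assume "\<not> a < b"
      then have "blk a P = {}" using blk_empty[OF p] by simp
      then show False using cu s by auto
    qed
    define B where "B = blk a P"
    have B: "B \<in> P" "a \<in> B" using blk_in[OF p] ab by (auto simp: B_def)
    have Bsub: "B \<subseteq> {a..<b}" using part_sub[OF p B(1)] .
    have fB: "finite B" using blk_fin[OF F] by (simp add: B_def)
    obtain u where u: "card B = s + u" using cu by (auto simp: B_def)
    show "P \<in> (\<Union>c\<in>{a<..b}. Pc k a b s U c)"
    proof (cases "u = 0")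
      case True
      then have "card (B \<inter> {a..<b}) = s" using u Bsub by (simp add: Int_absorb2)
      then have "P \<in> Pc k a b s U b" using P by (simp add: Pc_def B_def)
      then show ?thesis using ab by auto
    next
      case False
      then have "s < card B" using u by simp
      then obtain x where x: "x \<in> B" "card {y\<in>B. y < x} = s" using nth_elem[OF fB] by blast
      have "card {y\<in>B. y < x} \<noteq> 0" using x(2) s by simp
      then have "{y\<in>B. y < x} \<noteq> {}" by (metis card.empty)
      then obtain y where "y \<in> B" "y < x" by blast
      then have ax: "a < x" using Bsub by auto
      have xb: "x \<le> b" using Bsub x(1) by auto
      have "B \<inter> {a..<x} = {y\<in>B. y < x}" using Bsub by auto
      then have "P \<in> Pc k a b s U x" using P x by (simp add: Pc_def B_def)
      then show ?thesis using ax xb by auto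
    qed
  qed
qed

lemma Pc_disj: assumes "c1 \<in> {a<..b}" "c2 \<in> {a<..b}" "c1 \<noteq> c2"
  shows "Pc k a b s U c1 \<inter> Pc k a b s U c2 = {}"
proof -
  have key: "False" if "c1 < c2" "c1 \<in> {a<..b}" "c2 \<in> {a<..b}" "P \<in> Pc k a b s U c1" "P \<in> Pc k a b s U c2"
    for c1 c2 P
  proof -
    have F: "P \<in> FF k a b" and h1: "card (blk a P \<inter> {a..<c1}) = s" "c1 \<in> blk a P \<or> c1 = b"
      and h2: "card (blk a P \<inter> {a..<c2}) = s" using that by (auto simp: Pc_def cls_def)
    have "c1 \<in> blk a P" using h1(2) that(1-3) by auto
    then have "blk a P \<inter> {a..<c1} \<subset> blk a P \<inter> {a..<c2}" using that(1-3) by auto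
    then have "card (blk a P \<inter> {a..<c1}) < card (blk a P \<inter> {a..<c2})"
      by (rule psubset_card_mono[rotated]) (use blk_fin[OF F] in auto)
    then show False using h1 h2 by simp
  qed
  show ?thesis
  proof (rule ccontr)
    assume "\<not> ?thesis"
    then obtain P where "P \<in> Pc k a b s U c1" "P \<in> Pc k a b s U c2" by blast
    then show False using key assms by (cases "c1 < c2") (auto simp: not_less_iff_gr_or_eq)
  qed
qed

lemma Pc_finite: "finite (Pc k a b s U c)"
proof -
  have "Pc k a b s U c \<subseteq> cls k a b ((+) s ` U)" by (auto simp: Pc_def)
  then show ?thesis using cls_finite finite_subset by blast
qed

lemma card_split: assumes "0 < s"
  shows "card (cls k a b ((+) s ` U)) = (\<Sum>c\<in>{a<..b}. card (cls k a c {s}) * card (cls k c b U))"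
proof -
  have "card (cls k a b ((+) s ` U)) = (\<Sum>c\<in>{a<..b}. card (Pc k a b s U c))"
    unfolding Pc_cover[OF assms] by (rule card_UN_disjoint) (use Pc_finite Pc_disj in auto)
  also have "\<dots> = (\<Sum>c\<in>{a<..b}. card (cls k a c {s}) * card (cls k c b U))"
  proof (rule sum.cong)
    fix c assume "c \<in> {a<..b}"
    then show "card (Pc k a b s U c) = card (cls k a c {s}) * card (cls k c b U)"
      using bij_betw_same_card[OF Pc_bij] by (simp add: card_cartesian_product)
  qed simp
  finally show ?thesis .
qed

lemma sum_split: assumes "0 < s"
  shows "(\<Sum>P\<in>cls k a b ((+) s ` U). real (nf t k a P)) =
    (\<Sum>c\<in>{a<..b}. (\<Sum>R\<in>cls k a c {s}. real (nf t k a R)) * real (card (cls k c b U))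
       + real (card (cls k a c {s})) * (\<Sum>S\<in>cls k c b U. real (nf t k c S)))"
proof -
  have "(\<Sum>P\<in>cls k a b ((+) s ` U). real (nf t k a P)) = (\<Sum>c\<in>{a<..b}. \<Sum>P\<in>Pc k a b s U c. real (nf t k a P))"
    unfolding Pc_cover[OF assms] by (rule sum.UNION_disjoint) (use Pc_finite Pc_disj in auto)
  also have "\<dots> = (\<Sum>c\<in>{a<..b}. (\<Sum>R\<in>cls k a c {s}. real (nf t k a R)) * real (card (cls k c b U))
       + real (card (cls k a c {s})) * (\<Sum>S\<in>cls k c b U. real (nf t k c S)))"
  proof (rule sum.cong)
    fix c assume c: "c \<in> {a<..b}"
    then have ac: "a < c" and cb: "c \<le> b" by auto
    define g where "g = (\<lambda>(R, S). real (nf t k a R) + real (nf t k c S))"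
    have e: "real (nf t k a P) = g (rst P {a..<c}, rst P {c..<b})" if P: "P \<in> Pc k a b s U c" for P
    proof -
      have F: "P \<in> FF k a b" and cB: "c \<in> blk a P \<or> c = b" using P by (auto simp: Pc_def cls_def)
      have "nf t k a P = nf t k a (mrg a c (rst P {a..<c}) (rst P {c..<b}))" using mrg_rst[OF ac cb F cB] by simp
      also have "\<dots> = nf t k a (rst P {a..<c}) + nf t k c (rst P {c..<b})"
        by (rule M_nf[OF ac cb rl_FF[OF ac cb F cB] rr_FF[OF ac cb F cB]])
      finally show ?thesis by (simp add: g_def)
    qed
    have "(\<Sum>P\<in>Pc k a b s U c. real (nf t k a P)) = (\<Sum>P\<in>Pc k a b s U c. g (rst P {a..<c}, rst P {c..<b}))"
      using e by (rule sum.cong[OF refl])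
    also have "\<dots> = (\<Sum>x\<in>cls k a c {s} \<times> cls k c b U. g x)"
      by (rule sum.reindex_bij_betw[OF Pc_bij[OF ac cb]])
    also have "\<dots> = (\<Sum>R\<in>cls k a c {s}. \<Sum>S\<in>cls k c b U. real (nf t k a R) + real (nf t k c S))"
      by (simp add: sum.cartesian_product g_def)
    also have "\<dots> = (\<Sum>R\<in>cls k a c {s}. real (nf t k a R)) * real (card (cls k c b U))
       + real (card (cls k a c {s})) * (\<Sum>S\<in>cls k c b U. real (nf t k c S))"
      by (simp add: sum.distrib sum_distrib_right sum_distrib_left mult.commute)
    finally show "(\<Sum>P\<in>Pc k a b s U c. real (nf t k a P)) = (\<Sum>R\<in>cls k a c {s}. real (nf t k a R)) * real (card (cls k c b U))
       + real (card (cls k a c {s})) * (\<Sum>S\<in>cls k c b U. real (nf t k c S))" .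
  qed simp
  finally show ?thesis .
qed





definition DV :: "nat \<Rightarrow> nat set" where "DV k = {u. k dvd u}"

definition dd where "dd k L = card (cls k 0 L (DV k))"
definition ee where "ee k s L = card (cls k 0 L {s})"
definition mm where "mm t k L = (\<Sum>P\<in>cls k 0 L (DV k). real (mk t k P))"
definition mp where "mp t k L = (\<Sum>P\<in>cls k 0 L (DV k). real (nf t k 0 P))"
definition ff where "ff t k s L = (\<Sum>P\<in>cls k 0 L {s}. real (nf t k 0 P))"

lemma cls_empty_int: "cls k a a U = (if 0 \<in> U then {{}} else {})"
proof -
  have "FF k a a = {{}}" by (auto simp: FF_def partition_on_empty nc_def)
  moreover have "blk a {} = {}" by (simp add: blk_def)
  ultimately show ?thesis by (auto simp: cls_def)
qed

lemma blk_pos: assumes "P \<in> FF k a b" "a < b" shows "0 < card (blk a P)"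
proof -
  have "blk a P \<in> P" "a \<in> blk a P" using blk_in[OF FF_part[OF assms(1)]] assms(2) by auto
  then show ?thesis using blk_fin[OF assms(1)] card_gt_0_iff by blast
qed

lemma cls_zero_pos: "a < b \<Longrightarrow> cls k a b {0} = {}"
  using blk_pos by (fastforce simp: cls_def)

lemma sum_shift1: "(\<Sum>c\<in>{0<..Suc L}. f c) = (\<Sum>i=0..L. f (Suc i :: nat))"
proof -
  have e: "{0<..Suc L} = Suc ` {0..L}" by (auto simp: image_iff)
  show ?thesis unfolding e by (subst sum.reindex) auto
qed

lemma sum_split0: "(\<Sum>i=0..Suc L. f i) = f 0 + (\<Sum>c\<in>{0<..Suc L}. f (c::nat))"
proof -
  have "{0..Suc L} = insert 0 {0<..Suc L}" by auto
  then show ?thesis by simp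
qed

context
  fixes k t :: nat
  assumes k: "0 < k" and t: "0 < t"
begin

lemma ee_0: "ee k s 0 = (if s = 0 then 1 else 0)"
  by (simp add: ee_def cls_empty_int)

lemma ee_0s: "ee k 0 (Suc L) = 0"
  by (simp add: ee_def cls_zero_pos)

lemma dd_0: "dd k 0 = 1"
  by (simp add: dd_def cls_empty_int DV_def)

lemma ff_0: "ff t k s 0 = 0"
  by (simp add: ff_def cls_empty_int nf_def)

lemma ff_0s: "ff t k 0 L = 0"
proof (cases L)
  case 0 then show ?thesis by (simp add: ff_0)
next
  case (Suc L') then show ?thesis by (simp add: ff_def cls_zero_pos)
qed

lemma mp_0: "mp t k 0 = 0"
  by (simp add: mp_def cls_empty_int nf_def DV_def)

lemma card1: "0 < c \<Longrightarrow> card (cls k 0 c {Suc 0}) = dd k (c - 1)"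
proof -
  assume c: "0 < c"
  have "card (cls k 0 c {Suc 0}) = card (cls k (Suc 0) c (DV k))"
    using bij_betw_same_card[OF single_bij[OF c]] by (simp add: DV_def)
  also have "\<dots> = dd k (c - 1)" using card_cls_shift[of "Suc 0" c] c by (simp add: dd_def)
  finally show ?thesis .
qed

lemma sum1: "0 < c \<Longrightarrow> (\<Sum>R\<in>cls k 0 c {Suc 0}. real (nf t k 0 R)) = mm t k (c - 1)"
proof -
  assume c: "0 < c"
  have "(\<Sum>R\<in>cls k 0 c {Suc 0}. real (nf t k 0 R)) = (\<Sum>R\<in>cls k 0 c {Suc 0}. real (mk t k (R - {{0}})))"
    using single_nf by (intro sum.cong) auto
  also have "\<dots> = (\<Sum>Q\<in>cls k (Suc 0) c (DV k). real (mk t k Q))"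
    using sum.reindex_bij_betw[OF single_bij[OF c], of "\<lambda>Q. real (mk t k Q)"] by (simp add: DV_def)
  also have "\<dots> = mm t k (c - 1)" using sum_mk_shift[of "Suc 0" c] c by (simp add: mm_def)
  finally show ?thesis .
qed

lemma ee_rec: "ee k (Suc s) (Suc L) = (\<Sum>i=0..L. dd k i * ee k s (L - i))"
proof -
  have "cls k 0 (Suc L) {Suc s} = cls k 0 (Suc L) ((+) 1 ` {s})" by simp
  then have "ee k (Suc s) (Suc L) = (\<Sum>c\<in>{0<..Suc L}. card (cls k 0 c {1}) * card (cls k c (Suc L) {s}))"
    using card_split[where s=1 and k=k and a=0 and b="Suc L" and U="{s}"] by (simp add: ee_def)
  also have "\<dots> = (\<Sum>c\<in>{0<..Suc L}. dd k (c - 1) * ee k s (Suc L - c))"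
    by (intro sum.cong) (auto simp: card1 ee_def card_cls_shift[of _ "Suc L"])
  also have "\<dots> = (\<Sum>i=0..L. dd k i * ee k s (L - i))" by (simp add: sum_shift1)
  finally show ?thesis .
qed

lemma ff_rec: "ff t k (Suc s) (Suc L) = (\<Sum>i=0..L. mm t k i * ee k s (L - i) + dd k i * ff t k s (L - i))"
proof -
  have "cls k 0 (Suc L) {Suc s} = cls k 0 (Suc L) ((+) 1 ` {s})" by simp
  then have "ff t k (Suc s) (Suc L) = (\<Sum>c\<in>{0<..Suc L}. (\<Sum>R\<in>cls k 0 c {1}. real (nf t k 0 R)) * real (card (cls k c (Suc L) {s}))
       + real (card (cls k 0 c {1})) * (\<Sum>S\<in>cls k c (Suc L) {s}. real (nf t k c S)))"
    using sum_split[where s=1 and k=k and a=0 and b="Suc L" and U="{s}" and t=t] by (simp add: ff_def)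
  also have "\<dots> = (\<Sum>c\<in>{0<..Suc L}. mm t k (c - 1) * ee k s (Suc L - c) + dd k (c - 1) * ff t k s (Suc L - c))"
    by (intro sum.cong) (auto simp: card1 sum1 ee_def ff_def card_cls_shift[of _ "Suc L"] sum_nf_shift[of _ "Suc L"])
  also have "\<dots> = (\<Sum>i=0..L. mm t k i * ee k s (L - i) + dd k i * ff t k s (L - i))" by (simp add: sum_shift1)
  finally show ?thesis .
qed

lemma DV_shift: "cls k 0 (Suc L) (DV k) = cls k 0 (Suc L) ((+) k ` DV k)"
proof -
  have "u \<in> DV k \<longleftrightarrow> u \<in> (+) k ` DV k" if "0 < u" for u
  proof
    assume "u \<in> DV k"
    then have "k \<le> u" "k dvd u - k" using that by (auto simp: DV_def dvd_imp_le dvd_diff_nat)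
    then show "u \<in> (+) k ` DV k" by (auto simp: DV_def image_iff intro!: bexI[of _ "u - k"])
  next
    assume "u \<in> (+) k ` DV k" then show "u \<in> DV k" by (auto simp: DV_def)
  qed
  then show ?thesis using blk_pos[of _ k 0 "Suc L"] by (auto simp: cls_def)
qed

lemma dd_rec: "dd k (Suc L) = (\<Sum>c\<in>{0<..Suc L}. ee k k c * dd k (Suc L - c))"
proof -
  have "dd k (Suc L) = (\<Sum>c\<in>{0<..Suc L}. card (cls k 0 c {k}) * card (cls k c (Suc L) (DV k)))"
    unfolding dd_def DV_shift using card_split[where s=k and k=k and a=0 and b="Suc L" and U="DV k", OF k] by simp
  also have "\<dots> = (\<Sum>c\<in>{0<..Suc L}. ee k k c * dd k (Suc L - c))"
    by (intro sum.cong) (auto simp: ee_def dd_def card_cls_shift[of _ "Suc L"])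
  finally show ?thesis .
qed

lemma mp_rec: "mp t k (Suc L) = (\<Sum>c\<in>{0<..Suc L}. ff t k k c * dd k (Suc L - c) + ee k k c * mp t k (Suc L - c))"
proof -
  have "mp t k (Suc L) = (\<Sum>c\<in>{0<..Suc L}. (\<Sum>R\<in>cls k 0 c {k}. real (nf t k 0 R)) * real (card (cls k c (Suc L) (DV k)))
       + real (card (cls k 0 c {k})) * (\<Sum>S\<in>cls k c (Suc L) (DV k). real (nf t k c S)))"
    unfolding mp_def DV_shift using sum_split[where s=k and k=k and a=0 and b="Suc L" and U="DV k" and t=t, OF k] by simp
  also have "\<dots> = (\<Sum>c\<in>{0<..Suc L}. ff t k k c * dd k (Suc L - c) + ee k k c * mp t k (Suc L - c))"
    by (intro sum.cong) (auto simp: ee_def dd_def ff_def mp_def card_cls_shift[of _ "Suc L"] sum_nf_shift[of _ "Suc L"])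
  finally show ?thesis .
qed

lemma mm_eq: "mm t k L = mp t k L + ee k (t * k) L"
proof -
  have tk: "0 < t * k" using k t by simp
  have "mm t k L = (\<Sum>P\<in>cls k 0 L (DV k). real (nf t k 0 P) + (if card (blk 0 P) = t * k then 1 else 0))"
    unfolding mm_def by (intro sum.cong) (auto simp: mk_split[OF _ tk] cls_def FF_def)
  also have "\<dots> = mp t k L + (\<Sum>P\<in>cls k 0 L (DV k). if card (blk 0 P) = t * k then 1 else 0)"
    by (simp add: sum.distrib mp_def)
  also have "(\<Sum>P\<in>cls k 0 L (DV k). if card (blk 0 P) = t * k then 1 else (0::real)) =
      real (card {P\<in>cls k 0 L (DV k). card (blk 0 P) = t * k})"
    using sum.inter_filter[OF cls_finite, of "\<lambda>_. (1::real)"] by simp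
  also have "{P\<in>cls k 0 L (DV k). card (blk 0 P) = t * k} = cls k 0 L {t * k}"
    by (auto simp: cls_def DV_def)
  finally show ?thesis by (simp add: ee_def)
qed

definition "Dp = Abs_fps (\<lambda>L. real (dd k L))"
definition "Ep s = Abs_fps (\<lambda>L. real (ee k s L))"
definition "Fp s = Abs_fps (ff t k s)"
definition "Mp = Abs_fps (mm t k)"
definition "Mq = Abs_fps (mp t k)"

lemma fps_eqs:
  "Ep 0 = 1" "\<And>s. Ep (Suc s) = fps_X * Dp * Ep s" "Fp 0 = 0"
  "\<And>s. Fp (Suc s) = fps_X * (Mp * Ep s + Dp * Fp s)"
  "Dp = 1 + Ep k * Dp" "Mq = Fp k * Dp + Ep k * Mq" "Mp = Mq + Ep (t * k)"
proof -
  show "Ep 0 = 1"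
  proof (rule fps_ext)
    fix N show "Ep 0 $ N = 1 $ N" by (cases N) (simp_all add: Ep_def ee_0 ee_0s)
  qed
  show "Ep (Suc s) = fps_X * Dp * Ep s" for s
  proof (rule fps_ext)
    fix N show "Ep (Suc s) $ N = (fps_X * Dp * Ep s) $ N"
    proof (cases N)
      case 0 then show ?thesis by (simp add: Ep_def ee_0)
    next
      case (Suc L)
      have "(fps_X * Dp * Ep s) $ N = (Dp * Ep s) $ L" using Suc by (simp add: mult.assoc)
      also have "\<dots> = (\<Sum>i=0..L. real (dd k i) * real (ee k s (L - i)))" by (simp add: fps_mult_nth Dp_def Ep_def)
      finally show ?thesis using Suc by (simp add: Ep_def ee_rec)
    qed
  qed
  show "Fp 0 = 0" by (rule fps_ext) (simp add: Fp_def ff_0s)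
  show "Fp (Suc s) = fps_X * (Mp * Ep s + Dp * Fp s)" for s
  proof (rule fps_ext)
    fix N show "Fp (Suc s) $ N = (fps_X * (Mp * Ep s + Dp * Fp s)) $ N"
    proof (cases N)
      case 0 then show ?thesis by (simp add: Fp_def ff_0)
    next
      case (Suc L)
      have "(fps_X * (Mp * Ep s + Dp * Fp s)) $ N = (Mp * Ep s + Dp * Fp s) $ L" using Suc by simp
      also have "\<dots> = (\<Sum>i=0..L. mm t k i * real (ee k s (L - i)) + real (dd k i) * ff t k s (L - i))"
        by (simp add: fps_mult_nth Dp_def Ep_def Mp_def Fp_def sum.distrib)
      finally show ?thesis using Suc by (simp add: Fp_def ff_rec)
    qed
  qed
  show "Dp = 1 + Ep k * Dp"
  proof (rule fps_ext)
    fix N show "Dp $ N = (1 + Ep k * Dp) $ N"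
    proof (cases N)
      case 0 then show ?thesis using k by (simp add: Ep_def Dp_def dd_0 ee_0 fps_mult_nth)
    next
      case (Suc L)
      have "(1 + Ep k * Dp) $ N = (Ep k * Dp) $ (Suc L)" using Suc by simp
      also have "\<dots> = (\<Sum>i=0..Suc L. real (ee k k i) * real (dd k (Suc L - i)))"
        by (simp only: fps_mult_nth Ep_def Dp_def fps_nth_Abs_fps)
      also have "\<dots> = (\<Sum>c\<in>{0<..Suc L}. real (ee k k c) * real (dd k (Suc L - c)))"
        by (simp only: sum_split0) (use k in \<open>simp add: ee_0\<close>)
      finally show ?thesis using Suc by (simp add: Dp_def dd_rec)
    qed
  qed
  show "Mq = Fp k * Dp + Ep k * Mq"
  proof (rule fps_ext)
    fix N show "Mq $ N = (Fp k * Dp + Ep k * Mq) $ N"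
    proof (cases N)
      case 0 then show ?thesis using k by (simp add: Ep_def Dp_def Fp_def Mq_def mp_0 ff_0 ee_0 fps_mult_nth)
    next
      case (Suc L)
      have "(Fp k * Dp + Ep k * Mq) $ N = (\<Sum>i=0..Suc L. ff t k k i * real (dd k (Suc L - i)) + real (ee k k i) * mp t k (Suc L - i))"
        using Suc by (simp add: fps_mult_nth Ep_def Dp_def Fp_def Mq_def sum.distrib)
      also have "\<dots> = (\<Sum>c\<in>{0<..Suc L}. ff t k k c * real (dd k (Suc L - c)) + real (ee k k c) * mp t k (Suc L - c))"
        by (simp only: sum_split0) (use k in \<open>simp add: ee_0 ff_0\<close>)
      finally show ?thesis using Suc by (simp add: Mq_def mp_rec)
    qed
  qed
  show "Mp = Mq + Ep (t * k)"
    by (rule fps_ext) (simp add: Mp_def Mq_def Ep_def mm_eq)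
qed

lemma dd_val: "real (dd k (k * n)) = ae k 1 n"
proof -
  have "Dp ^ 1 = Es k 1"
    using fps_main(1)[OF k fps_eqs(1,2,3,4,5,6,7)] by blast
  then have "Dp $ (k * n) = Es k 1 $ (k * n)" by simp
  then show ?thesis using k by (simp add: Dp_def Es_def)
qed

lemma mm_val: "mm t k (k * n) = (if n < t then 0 else real (gc k (t * k) (n - t)))"
proof -
  have "Mp = fps_X ^ (t * k) * Gs k (t * k)"
    using fps_main(2)[OF k fps_eqs(1,2,3,4,5,6,7)] by blast
  then have "Mp $ (k * n) = (fps_X ^ (t * k) * Gs k (t * k)) $ (k * n)" by simp
  then have e: "mm t k (k * n) = (fps_X ^ (t * k) * Gs k (t * k)) $ (k * n)" by (simp add: Mp_def)
  show ?thesis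
  proof (cases "n < t")
    case True
    then have "k * n < t * k" using k by (simp add: mult.commute)
    then show ?thesis using e True by (simp add: fps_X_power_mult_nth)
  next
    case False
    then have "k * n - t * k = k * (n - t)" by (simp add: diff_mult_distrib2 mult.commute)
    then show ?thesis using e False k by (simp add: fps_X_power_mult_nth Gs_def mult.commute)
  qed
qed

end

lemma NCk_eq: assumes k: "0 < k" and n: "0 < n" shows "NCk k n = cls k 1 (k*n+1) (DV k)"
proof (rule set_eqI)
  fix P
  have iv: "{1..k*n} = {1..<k*n+1}" by auto
  have one: "1 \<in> {1..<k*n+1}" using k n by simp
  show "P \<in> NCk k n \<longleftrightarrow> P \<in> cls k 1 (k*n+1) (DV k)"
  proof
    assume "P \<in> NCk k n"
    then have p0: "partition_on {1..k*n} P" and nn: "\<not> (\<exists>a b c d B1 B2. 1 \<le> a \<and> a < b \<and> b < c \<and> c < d \<and> d \<le> k * n \<and>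
          B1 \<in> P \<and> B2 \<in> P \<and> B1 \<noteq> B2 \<and> a \<in> B1 \<and> c \<in> B1 \<and> b \<in> B2 \<and> d \<in> B2)"
      and dv: "\<forall>B\<in>P. k dvd card B" by (auto simp: NCk_def noncrossing_partition_def)
    have p: "partition_on {1..<k*n+1} P" using p0 unfolding iv .
    have "nc P"
    proof (rule ncI)
      fix x y z w X Y
      assume h: "x < y" "y < z" "z < w" "X \<in> P" "Y \<in> P" "x \<in> X" "z \<in> X" "y \<in> Y" "w \<in> Y"
      have "1 \<le> x" using part_sub[OF p h(4)] h(6) by auto
      moreover have "w \<le> k * n" using part_sub[OF p h(5)] h(9) by auto
      ultimately show "X = Y" using nn h by blast
    qed
    moreover have "card (blk 1 P) \<in> DV k" using blk_in[OF p one] dv by (auto simp: DV_def)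
    ultimately show "P \<in> cls k 1 (k*n+1) (DV k)" using p dv by (simp add: cls_def FF_def)
  next
    assume "P \<in> cls k 1 (k*n+1) (DV k)"
    then have p: "partition_on {1..<k*n+1} P" and nc: "nc P" and dv: "\<forall>B\<in>P. 1 \<notin> B \<longrightarrow> k dvd card B"
      and c1: "k dvd card (blk 1 P)" by (auto simp: cls_def FF_def DV_def)
    have "\<forall>B\<in>P. k dvd card B"
    proof
      fix B assume B: "B \<in> P"
      show "k dvd card B"
      proof (cases "1 \<in> B")
        case True then show ?thesis using blk_eq[OF p B True] c1 by simp
      next
        case False then show ?thesis using dv B by simp
      qed
    qed
    moreover have "\<not> (\<exists>a b c d B1 B2. 1 \<le> a \<and> a < b \<and> b < c \<and> c < d \<and> d \<le> k * n \<and>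
          B1 \<in> P \<and> B2 \<in> P \<and> B1 \<noteq> B2 \<and> a \<in> B1 \<and> c \<in> B1 \<and> b \<in> B2 \<and> d \<in> B2)"
      using ncD[OF nc] by blast
    moreover have p0: "partition_on {1..k*n} P" using p unfolding iv .
    ultimately show "P \<in> NCk k n" by (simp add: NCk_def noncrossing_partition_def)
  qed
qed

lemma ae_one: assumes n: "0 < n" shows "ae k 1 n * real (n * k + 1) = real ((k + 1) * n choose n)"
proof -
  obtain n' where n': "n = Suc n'" using n by (cases n) auto
  define N where "N = (k + 1) * n"
  have N1: "N - n' = n * k + 1" by (simp add: N_def n' algebra_simps)
  have a1: "(N - n') * (N choose n') = N * ((N - 1) choose n')" by (rule binomial_absorb_comp)
  have a2: "Suc n' * (N choose Suc n') = N * ((N - 1) choose n')" by (rule binomial_absorption)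
  have key: "real (n * k + 1) * real (N choose n') = real n * real (N choose n)"
  proof -
    have "(n * k + 1) * (N choose n') = n * (N choose n)" using a1 a2 N1 n' by simp
    then show ?thesis by (metis of_nat_mult)
  qed
  have "ae k 1 n = real (Suc N choose Suc n') - real (k+1) * real (N choose n')"
    unfolding ae_def using n' by (simp add: N_def)
  also have "\<dots> = real (N choose n) - real k * real (N choose n')"
    using n' by (simp add: algebra_simps)
  finally have A: "ae k 1 n = real (N choose n) - real k * real (N choose n')" .
  have "ae k 1 n * real (n * k + 1) = real (N choose n) * real (n * k + 1) - real k * (real (n * k + 1) * real (N choose n'))"
    unfolding A by (simp add: algebra_simps)
  also have "\<dots> = real (N choose n)" unfolding key by (simp add: algebra_simps)
  finally show ?thesis by (simp add: N_def)
qed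

theorem corollary2p2:
  fixes k n t :: nat
  assumes "0 < k" and "0 < n" and "0 < t"
  shows "(\<Sum>\<pi>\<in>NCk k n. real (card {B \<in> \<pi>. card B = t * k})) / real (card (NCk k n))
         = real (n * k + 1) * real (binom (int (n * (k + 1)) - int t - 1) (int (n * k) - 1))
           / real (binom (int ((k + 1) * n)) (int n))"
proof -
  note k = assms(1) and n = assms(2) and t = assms(3)
  have S: "(\<Sum>\<pi>\<in>NCk k n. real (card {B \<in> \<pi>. card B = t * k})) = mm t k (k * n)"
    unfolding NCk_eq[OF k n] mm_def using sum_mk_shift[where a=1 and b="k*n+1" and k=k and U="DV k" and t=t] by (simp add: mk_def)
  have C: "card (NCk k n) = dd k (k * n)"
    unfolding NCk_eq[OF k n] dd_def using card_cls_shift[where a=1 and b="k*n+1" and k=k and U="DV k"] by simp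
  have B1: "binom (int ((k + 1) * n)) (int n) = (k + 1) * n choose n"
    unfolding binom_def nat_int by simp
  have B2: "real (binom (int (n * (k + 1)) - int t - 1) (int (n * k) - 1)) = mm t k (k * n)"
  proof (cases "n < t")
    case True
    then have "\<not> int (n * k) - 1 \<le> int (n * (k + 1)) - int t - 1" by (simp add: algebra_simps)
    then show ?thesis using mm_val[OF k t] True by (simp add: binom_def)
  next
    case False
    define T where "T = n * (k + 1) - t - 1"
    have nk: "1 \<le> n * k" using k n by simp
    have tn: "t \<le> n" using False by simp
    have ge: "Suc t \<le> n * (k + 1)"
    proof -
      have "n * (k + 1) = n * k + n" by (simp add: algebra_simps)
      then show ?thesis using tn nk by linarith
    qed
    have e1: "T + t + 1 = n * (k + 1)" using ge by (simp add: T_def)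
    then have e2: "int T + int t + 1 = int (n * (k + 1))" by (metis of_nat_1 of_nat_add)
    have T1: "int (n * (k + 1)) - int t - 1 = int T" using e2 by linarith
    have T2: "int (n * k) - 1 = int (n * k - 1)" using nk by simp
    have le: "n * k - 1 \<le> T" using tn by (simp add: T_def algebra_simps)
    have "binom (int (n * (k + 1)) - int t - 1) (int (n * k) - 1) = T choose (n * k - 1)"
      unfolding binom_def T1 T2 using le by simp
    also have "\<dots> = T choose (T - (n * k - 1))" using binomial_symmetric[OF le] .
    also have "T - (n * k - 1) = n - t" using tn nk by (simp add: T_def algebra_simps)
    also have "gc k (t * k) (n - t) = T choose (n - t)"
    proof -
      obtain d where d: "n = t + d" using tn le_Suc_ex by blast
      have "t * k + (k + 1) * (n - t) - 1 = T" unfolding T_def d by (simp add: algebra_simps)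
      then show ?thesis using t k by (simp add: gc_def)
    qed
    finally show ?thesis using mm_val[OF k t] False by simp
  qed
  have D: "real (dd k (k * n)) * real (n * k + 1) = real ((k + 1) * n choose n)"
    using dd_val[OF k t] ae_one[OF n] by simp
  have pos: "real (n * k + 1) > 0" by (rule of_nat_0_less_iff[THEN iffD2]) simp
  have Cpos: "real ((k + 1) * n choose n) > 0" by (rule of_nat_0_less_iff[THEN iffD2]) simp
  have dpos: "real (dd k (k * n)) > 0" using D pos Cpos by (metis zero_less_mult_pos2)
  have e: "real ((k + 1) * n choose n) = real (dd k (k * n)) * real (n * k + 1)" using D by simp
  have "mm t k (k * n) / real (dd k (k * n)) =
      real (n * k + 1) * mm t k (k * n) / (real (dd k (k * n)) * real (n * k + 1))"
    using pos dpos by simp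
  then show ?thesis unfolding S C B1 B2 e .
qed


end
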